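(* Let $\mathbb{G}$ be a homogeneous group of homogeneous dimension $Q\geq3$ and $|\cdot|$ a homogeneous quasi-norm. Let $2\leq p<Q$ and $-\infty<\alpha<\frac{Q-p}{p}$. Set $f_\alpha(x)=|x|^{-\frac{Q-p-\alpha p}{p}}$ and, for $R>0$ and functions $u,v$ for which the integral is finite, $$d_R(u,v)=\left(\int_{\mathbb{G}}\frac{|u(x)-v(x)|^p}{\left|\log\frac{R}{|x|}\right|^p|x|^{(\alpha+1)p}}dx\right)^{1/p}.$$ Then for every radial $f\in C_0^\infty(\mathbb{G}\setminus\{0\})$, written $f(x)=\tilde f(|x|)$, $$\int_{\mathbb{G}}\frac{|\mathcal{R}f|^p}{|x|^{\alpha p}}dx-\left(\frac{Q-p-\alpha p}{p}\right)^p\int_{\mathbb{G}}\frac{|f|^p}{|x|^{(\alpha+1)p}}dx\geq c_p\left(\frac{p-1}{p}\right)^p\sup_{R>0}d_R\big(f,c_f(R)f_\alpha\big)^p,$$ where $c_f(R)=R^{\frac{Q-p-\alpha p}{p}}\tilde f(R)$ and $c_p=\min_{0<t\leq1/2}\left((1-t)^p-t^p+pt^{p-1}\right)$.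
   Context: A homogeneous group is a connected simply connected Lie group $\mathbb{G}$ with dilations $x\mapsto\lambda x$ induced by $D_\lambda=\mathrm{Exp}(A\ln\lambda)$ on its Lie algebra ($A$ diagonalisable with positive eigenvalues, $D_\lambda$ Lie algebra automorphisms), and homogeneous dimension $Q=\mathrm{Tr}\,A$. A homogeneous quasi-norm is a continuous nonnegative function $|\cdot|$, vanishing only at $0$, with $|x^{-1}|=|x|$, $|\lambda x|=\lambda|x|$. A function is radial if it depends only on $|x|$. Writing $x=ry$, $r=|x|$, $|y|=1$, the radial derivative is $\mathcal{R}f(x)=\frac{d}{dr}f(ry)$. Integrals are with respect to Haar measure. *)

theory Defs
  imports "HOL-Analysis.Analysis"
begin

text \<open>A homogeneous group is modelled in exponential coordinates on a Euclidean
space 'a (identified with its Lie algebra via Exp): identity 0, inverse uminus,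
group law gmul, dilations diagonal in the basis Basis with positive weights nu,
so that the dilation matrix A = diag(nu) and Q = Tr A.\<close>

definition dil :: "('a::euclidean_space \<Rightarrow> real) \<Rightarrow> real \<Rightarrow> 'a \<Rightarrow> 'a" where
  "dil nu l x = (\<Sum>b\<in>Basis. (l powr nu b * (x \<bullet> b)) *\<^sub>R b)"

definition hom_dim :: "('a::euclidean_space \<Rightarrow> real) \<Rightarrow> real" where
  "hom_dim nu = (\<Sum>b\<in>(Basis::'a set). nu b)"

definition homogeneous_group :: "('a::euclidean_space \<Rightarrow> 'a \<Rightarrow> 'a) \<Rightarrow> ('a \<Rightarrow> real) \<Rightarrow> bool" where
  "homogeneous_group gmul nu \<longleftrightarrow>
     (\<forall>x y z. gmul (gmul x y) z = gmul x (gmul y z)) \<and>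
     (\<forall>x. gmul 0 x = x \<and> gmul x 0 = x) \<and>
     (\<forall>x. gmul x (- x) = 0 \<and> gmul (- x) x = 0) \<and>
     continuous_on UNIV (\<lambda>(x, y). gmul x y) \<and>
     (\<forall>b\<in>Basis. nu b > 0) \<and>
     (\<forall>l>0. \<forall>x y. dil nu l (gmul x y) = gmul (dil nu l x) (dil nu l y)) \<and>
     (\<forall>x. distr lborel lborel (gmul x) = lborel)"

definition hom_quasi_norm :: "('a::euclidean_space \<Rightarrow> real) \<Rightarrow> ('a \<Rightarrow> real) \<Rightarrow> bool" where
  "hom_quasi_norm nu N \<longleftrightarrow>
     continuous_on UNIV N \<and> (\<forall>x. N x \<ge> 0) \<and> (\<forall>x. N x = 0 \<longleftrightarrow> x = 0) \<and>
     (\<forall>x. N (- x) = N x) \<and> (\<forall>l>0. \<forall>x. N (dil nu l x) = l * N x)"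

text \<open>Radial derivative: writing x = r y with r = N x, N y = 1, R f x = d/dr f(r y).\<close>
definition radial_deriv :: "('a::euclidean_space \<Rightarrow> real) \<Rightarrow> ('a \<Rightarrow> real) \<Rightarrow> ('a \<Rightarrow> real) \<Rightarrow> 'a \<Rightarrow> real" where
  "radial_deriv nu N f x =
     (if x = 0 then 0 else deriv (\<lambda>r. f (dil nu r (dil nu (1 / N x) x))) (N x))"

primrec Ck :: "nat \<Rightarrow> ('a::euclidean_space \<Rightarrow> real) \<Rightarrow> bool" where
  "Ck 0 f = continuous_on UNIV f"
| "Ck (Suc k) f = ((\<forall>x. f differentiable at x) \<and>
                   (\<forall>b\<in>Basis. Ck k (\<lambda>x. frechet_derivative f (at x) b)))"

definition smooth_fun :: "('a::euclidean_space \<Rightarrow> real) \<Rightarrow> bool" where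
  "smooth_fun f \<longleftrightarrow> (\<forall>k. Ck k f)"

definition C0_infty_punctured :: "('a::euclidean_space \<Rightarrow> real) \<Rightarrow> bool" where
  "C0_infty_punctured f \<longleftrightarrow> smooth_fun f \<and>
     (\<exists>K. compact K \<and> 0 \<notin> K \<and> (\<forall>x. x \<notin> K \<longrightarrow> f x = 0))"

end

theory Submission
  imports Defs
begin

definition phi :: "real \<Rightarrow> real \<Rightarrow> real" where "phi p y = \<bar>y\<bar> powr p"
definition psi :: "real \<Rightarrow> real \<Rightarrow> real" where "psi p y = \<bar>y\<bar> powr (p - 2) * y"

lemma tangent_powr:
  fixes q x y :: real
  assumes q: "q \<ge> 1" and x: "x \<ge> 0" and y: "y > 0"
  shows "x powr q \<ge> y powr q + q * y powr (q - 1) * (x - y)"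
proof (cases "x = 0")
  case True
  have "y powr q = y powr (q - 1) * y" using y by (simp add: powr_diff)
  moreover have "y powr (q-1) * y * 1 \<le> y powr (q-1) * y * q" using q y by (intro mult_left_mono) auto
  ultimately show ?thesis using True by (simp add: algebra_simps)
next
  case False
  have "q * y powr (q - 1) * (x - y) \<le> x powr q - y powr q"
    using powr_convex[OF q] y x False
    by (intro convex_on_imp_above_tangent[where A = "{0<..}"])
       (auto intro!: derivative_eq_intros simp: interior_open)
  then show ?thesis by simp
qed

lemma two_powr_ge: fixes p :: real assumes "p \<ge> 2" shows "p \<le> 2 powr (p - 1)"
proof -
  have "2 powr (p - 1) \<ge> 1 powr (p-1) + (p-1) * 1 powr (p - 1 - 1) * (2 - 1)"
    using tangent_powr[of "p-1" 2 1] assms by simp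
  thus ?thesis by simp
qed


lemma G_neg:
  fixes p s :: real assumes p: "p \<ge> 2" and s: "s \<ge> 0"
  shows "(1+s) powr p - s powr p - p * s powr (p-1) \<ge> 1"
proof -
  let ?H = "\<lambda>x::real. (1+x) powr p - x powr p - p * x powr (p-1)"
  have "?H 0 \<le> ?H s"
  proof (rule DERIV_nonneg_imp_increasing_open[OF s])
    fix x :: real assume x: "0 < x" "x < s"
    have d: "(?H has_real_derivative (p * (1+x) powr (p-1) - p * x powr (p-1) - p * ((p-1) * x powr (p-2)))) (at x)"
      using x by (rule_tac derivative_eq_intros refl | simp)+
    have t: "(1+x) powr (p-1) \<ge> x powr (p-1) + (p-1) * x powr (p-1-1) * ((1+x) - x)"
      using tangent_powr[of "p-1" "1+x" x] p x by simp
    have "p * (1+x) powr (p-1) - p * x powr (p-1) - p * ((p-1) * x powr (p-2)) = p * ((1+x) powr (p-1) - x powr (p-1) - (p-1) * x powr (p-2))"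
      by (simp add: algebra_simps)
    also have "\<dots> \<ge> 0" using t p by (intro mult_nonneg_nonneg) (auto simp: diff_diff_eq)
    finally show "\<exists>y. (?H has_real_derivative y) (at x) \<and> 0 \<le> y" using d by blast
  next
    show "continuous_on {0..s} ?H" using p
      by (intro continuous_intros continuous_on_powr') auto
  qed
  thus ?thesis using p by simp
qed

lemma G_mid:
  fixes p y :: real assumes p: "p \<ge> 2" and y: "1/2 \<le> y" "y \<le> 1"
  shows "(1-y) powr p - y powr p + p * y powr (p-1) \<ge> (1-1/2) powr p - (1/2) powr p + p * (1/2) powr (p-1)"
proof -
  let ?H = "\<lambda>x::real. (1-x) powr p - x powr p + p * x powr (p-1)"
  show "?H (1/2) \<le> ?H y"
  proof (rule DERIV_nonneg_imp_increasing_open[OF y(1)])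
    fix x :: real assume x: "1/2 < x" "x < y"
    have d: "(?H has_real_derivative (- (p * (1-x) powr (p-1)) - p * x powr (p-1) + p * ((p-1) * x powr (p-2)))) (at x)"
      using x y by (rule_tac derivative_eq_intros refl | simp)+
    have "0 \<le> 1 - x" using x y by simp
    from powr_mult_base[OF this, of "p-2"] have e1: "(1-x) powr (p-1) = (1-x) powr (p-2) * (1-x)" by (simp add: algebra_simps)
    have "0 \<le> x" using x by simp
    from powr_mult_base[OF this, of "p-2"] have e2: "x powr (p-1) = x powr (p-2) * x" by (simp add: algebra_simps)
    have m: "(1-x) powr (p-2) \<le> x powr (p-2)" using x y p by (intro powr_mono2) auto
    have "(1-x) powr (p-1) + x powr (p-1) \<le> x powr (p-2) * (1-x) + x powr (p-2) * x"
      unfolding e1 e2 using m x y by (intro add_mono mult_right_mono) auto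
    also have "\<dots> = x powr (p-2)" by (simp add: algebra_simps)
    also have "\<dots> \<le> (p-1) * x powr (p-2)" using p mult_right_mono[of 1 "p-1" "x powr (p-2)"] by simp
    finally have "0 \<le> p * ((p-1) * x powr (p-2) - (1-x) powr (p-1) - x powr (p-1))" using p by simp
    then show "\<exists>d. (?H has_real_derivative d) (at x) \<and> 0 \<le> d" using d by (intro exI[of _ _]) (auto simp: algebra_simps)
  next
    show "continuous_on {1/2..y} ?H" using p y
      by (intro continuous_intros continuous_on_powr') auto
  qed
qed

lemma G_big:
  fixes p y :: real assumes p: "p \<ge> 2" and y: "1 \<le> y"
  shows "(y-1) powr p - y powr p + p * y powr (p-1) \<ge> p - 1"
proof -
  let ?H = "\<lambda>x::real. (x-1) powr p - x powr p + p * x powr (p-1)"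
  have "?H 1 \<le> ?H y"
  proof (rule DERIV_nonneg_imp_increasing_open[OF y])
    fix x :: real assume x: "1 < x" "x < y"
    have d: "(?H has_real_derivative (p * (x-1) powr (p-1) - p * x powr (p-1) + p * ((p-1) * x powr (p-2)))) (at x)"
      using x by (rule_tac derivative_eq_intros refl | simp)+
    have t: "(x-1) powr (p-1) \<ge> x powr (p-1) + (p-1) * x powr (p-1-1) * ((x-1) - x)"
      using tangent_powr[of "p-1" "x-1" x] p x by simp
    have "0 \<le> p * ((x-1) powr (p-1) - x powr (p-1) + (p-1) * x powr (p-2))"
      using t p by (intro mult_nonneg_nonneg) (auto simp: diff_diff_eq algebra_simps)
    then show "\<exists>d. (?H has_real_derivative d) (at x) \<and> 0 \<le> d" using d by (intro exI[of _ _]) (auto simp: algebra_simps)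
  next
    show "continuous_on {1..y} ?H" using p y
      by (intro continuous_intros continuous_on_powr') auto
  qed
  thus ?thesis using p by simp
qed


definition cp :: "real \<Rightarrow> real" where
  "cp p = Inf ((\<lambda>t. (1 - t) powr p - t powr p + p * t powr (p - 1)) ` {0<..1/2})"

lemma psi_pos: "0 \<le> y \<Longrightarrow> psi p y = y powr (p - 1)"
proof -
  assume "0 \<le> y"
  from powr_mult_base[OF this, of "p-2"] show ?thesis by (simp add: psi_def algebra_simps \<open>0 \<le> y\<close>)
qed

lemma psi_neg: "psi p (- y) = - psi p y" by (simp add: psi_def)
lemma phi_neg: "phi p (- y) = phi p y" by (simp add: phi_def)
lemma phi_nonneg: "phi p y \<ge> 0" by (simp add: phi_def)
lemma phi_mult: "phi p (a * y) = \<bar>a\<bar> powr p * phi p y" by (simp add: phi_def abs_mult powr_mult)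
lemma psi_mult_pos: "a \<ge> 0 \<Longrightarrow> psi p (a * y) = a powr (p - 1) * psi p y"
proof -
  assume a: "a \<ge> 0"
  have "psi p (a * y) = a powr (p-2) * a * psi p y"
    using a by (simp add: psi_def abs_mult powr_mult)
  also have "a powr (p-2) * a = a powr (p - 1)" using powr_mult_base[OF a, of "p-2"] by (simp add: algebra_simps)
  finally show ?thesis .
qed
lemma psi_times: "psi p y * y = phi p y"
proof -
  have "psi p y * y = \<bar>y\<bar> powr (p - 2) * \<bar>y\<bar> * \<bar>y\<bar>" by (simp add: psi_def abs_mult_self_eq mult.assoc)
  also have "\<dots> = \<bar>y\<bar> powr p" 
    using powr_mult_base[of "\<bar>y\<bar>" "p-2"] powr_mult_base[of "\<bar>y\<bar>" "p-1"] by (simp add: algebra_simps)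
  finally show ?thesis by (simp add: phi_def)
qed

lemma cp_elem_nonneg: fixes p t :: real assumes p: "p \<ge> 2" and t: "t \<in> {0<..1/2}"
  shows "0 \<le> (1 - t) powr p - t powr p + p * t powr (p - 1)"
proof -
  have "t powr p \<le> (1-t) powr p" using t p by (intro powr_mono2) auto
  thus ?thesis using p by simp
qed

lemma cp_nonneg: "p \<ge> 2 \<Longrightarrow> 0 \<le> cp p"
  unfolding cp_def by (rule cInf_greatest) (auto intro: cp_elem_nonneg)

lemma cp_le: assumes p: "p \<ge> 2" and t: "t \<in> {0<..1/2}"
  shows "cp p \<le> (1 - t) powr p - t powr p + p * t powr (p - 1)"
  unfolding cp_def
  by (rule cInf_lower) (use p t in \<open>auto intro!: bdd_belowI[of _ 0] cp_elem_nonneg\<close>)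

lemma cp_le1: assumes p: "p \<ge> 2" shows "cp p \<le> (1-1/2) powr p - (1/2) powr p + p * (1/2) powr (p-1)" "cp p \<le> 1"
proof -
  show c: "cp p \<le> (1-1/2) powr p - (1/2) powr p + p * (1/2) powr (p-1)" using cp_le[OF p, of "1/2"] by simp
  have "p * (1/2) powr (p-1) = p / 2 powr (p-1)" by (simp add: powr_divide powr_minus_divide)
  also have "\<dots> \<le> 1" using two_powr_ge[OF p] by simp
  finally show "cp p \<le> 1" using c by simp
qed

lemma G_ge: assumes p: "p \<ge> 2"
  shows "cp p \<le> phi p (1 - y) - phi p y + p * psi p y"
proof -
  consider "y \<le> 0" | "0 < y" "y \<le> 1/2" | "1/2 \<le> y" "y \<le> 1" | "1 \<le> y" by linarith
  then show ?thesis
  proof cases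
    case 1
    define s where "s = - y"
    have s: "s \<ge> 0" "y = - s" using 1 by (auto simp: s_def)
    have "phi p (1 - y) - phi p y + p * psi p y = (1+s) powr p - s powr p - p * s powr (p-1)"
      using s by (simp add: phi_def psi_neg psi_pos)
    also have "\<dots> \<ge> 1" by (rule G_neg[OF p s(1)])
    finally show ?thesis using cp_le1[OF p] by simp
  next
    case 2
    have "phi p (1 - y) - phi p y + p * psi p y = (1 - y) powr p - y powr p + p * y powr (p - 1)"
      using 2 by (simp add: phi_def psi_pos)
    then show ?thesis using cp_le[OF p, of y] 2 by simp
  next
    case 3
    have "phi p (1 - y) - phi p y + p * psi p y = (1 - y) powr p - y powr p + p * y powr (p - 1)"
      using 3 by (simp add: phi_def psi_pos)
    then show ?thesis using G_mid[OF p 3] cp_le1[OF p] by simp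
  next
    case 4
    have "phi p (1 - y) - phi p y + p * psi p y = (y - 1) powr p - y powr p + p * y powr (p - 1)"
      using 4 by (simp add: phi_def psi_pos)
    then show ?thesis using G_big[OF p 4] cp_le1[OF p] p by simp
  qed
qed

lemma elem_ineq: assumes p: "p \<ge> 2"
  shows "phi p (a - b) \<ge> phi p b - p * psi p b * a + cp p * phi p a"
proof (cases "a = 0")
  case True then show ?thesis by (simp add: phi_def phi_neg[of p b, unfolded phi_def])
next
  case False
  define y where "y = b / a"
  have b: "b = a * y" using False by (simp add: y_def)
  have e1: "phi p (a - b) = \<bar>a\<bar> powr p * phi p (1 - y)" unfolding b phi_mult[symmetric] by (simp add: algebra_simps)
  have e2: "phi p b = \<bar>a\<bar> powr p * phi p y" unfolding b phi_mult ..
  have e3: "psi p b * a = \<bar>a\<bar> powr p * psi p y"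
  proof (cases "a > 0")
    case True
    have "psi p b * a = a powr (p-1) * a * psi p y" unfolding b using True by (simp add: psi_mult_pos)
    also have "a powr (p-1) * a = \<bar>a\<bar> powr p" using True powr_mult_base[of a "p-1"] by (simp add: algebra_simps)
    finally show ?thesis by simp
  next
    case False2: False
    have b': "b = (- a) * (- y)" using b by simp
    have na: "-a \<ge> 0" using False2 by simp
    have "psi p b = (-a) powr (p-1) * psi p (-y)" unfolding b' by (rule psi_mult_pos[OF na])
    then have "psi p b * a = (-a) powr (p-1) * (-a) * psi p y" by (simp add: psi_neg)
    also have "(-a) powr (p-1) * (-a) = \<bar>a\<bar> powr p" using False2 False powr_mult_base[of "-a" "p-1"] by (simp add: algebra_simps)
    finally show ?thesis by simp
  qed
  have "\<bar>a\<bar> powr p * cp p \<le> \<bar>a\<bar> powr p * (phi p (1 - y) - phi p y + p * psi p y)"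
    using G_ge[OF p, of y] by (intro mult_left_mono) auto
  then show ?thesis unfolding e1 e2 mult.assoc[of p] e3
    by (simp add: phi_def algebra_simps)
qed

lemma convex_phi: assumes p: "p \<ge> 2"
  shows "phi p x \<ge> phi p b + p * psi p b * (x - b)"
proof -
  have "0 \<le> cp p * phi p (b - x)" using cp_nonneg[OF p] phi_nonneg[of p "b - x"] by simp
  then show ?thesis using elem_ineq[OF p, where a="b - x" and b=b] phi_neg[of p x]
    by (simp add: algebra_simps)
qed


lemma phi_tendsto_aux: assumes p: "p > 1"
  shows "((\<lambda>h::real. \<bar>h\<bar> powr (p - 1)) \<longlongrightarrow> 0) (at 0)"
  using p by (intro tendsto_zero_powrI tendsto_intros) (auto simp: tendsto_rabs_zero_iff intro: tendsto_ident_at)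

lemma phi_deriv: assumes p: "p \<ge> 2"
  shows "(phi p has_real_derivative p * psi p y) (at y)"
proof -
  consider "y > 0" | "y < 0" | "y = 0" by linarith
  then show ?thesis
  proof cases
    case 1
    have "((\<lambda>z. z powr p) has_real_derivative p * y powr (p - 1)) (at y)"
      using has_real_derivative_powr[OF 1] .
    moreover have eq: "psi p y = y powr (p-1)" using 1 by (simp add: psi_pos)
    ultimately show ?thesis unfolding eq
      by (rule_tac has_field_derivative_transform_within_open[where S="{0<..}"])
         (use 1 in \<open>auto simp: phi_def\<close>)
  next
    case 2
    have "((\<lambda>z. (-z) powr p) has_real_derivative p * (-y) powr (p - 1) * (-1)) (at y)"
      using 2 by (intro DERIV_fun_powr derivative_eq_intros) auto
    moreover have eq: "psi p y = - ((-y) powr (p-1))" using 2 psi_pos[of "-y" p] psi_neg[of p "-y"] by simp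
    ultimately show ?thesis unfolding eq
      by (rule_tac has_field_derivative_transform_within_open[where S="{..<0}"])
         (use 2 in \<open>auto simp: phi_def\<close>)
  next
    case 3
    have "((\<lambda>h. (phi p (0 + h) - phi p 0) / h) \<longlongrightarrow> 0) (at 0)"
    proof (rule tendsto_norm_zero_cancel)
      have "((\<lambda>h::real. \<bar>h\<bar> powr (p - 1)) \<longlongrightarrow> 0) (at 0)" using p by (intro phi_tendsto_aux) auto
      moreover have "\<forall>\<^sub>F h in at 0. \<bar>h\<bar> powr (p - 1) = norm ((phi p (0 + h) - phi p 0) / h)"
      proof (rule eventually_at_filter[THEN iffD2], rule always_eventually, intro allI impI)
        fix h :: real assume "h \<noteq> 0"
        then show "\<bar>h\<bar> powr (p - 1) = norm ((phi p (0 + h) - phi p 0) / h)"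
          by (simp add: phi_def powr_diff)
      qed
      ultimately show "((\<lambda>h. norm ((phi p (0 + h) - phi p 0) / h)) \<longlongrightarrow> 0) (at 0)"
        by (rule Lim_transform_eventually)
    qed
    then have "(phi p has_real_derivative 0) (at 0)" by (simp add: DERIV_def)
    then show ?thesis using 3 by (simp add: psi_def)
  qed
qed

lemma psi_cont: assumes p: "p \<ge> 2" shows "isCont (psi p) y"
proof (cases "y = 0")
  case False
  show ?thesis unfolding psi_def using False by (intro continuous_intros) auto
next
  case True
  have "((\<lambda>h. psi p h) \<longlongrightarrow> 0) (at 0)"
  proof (rule tendsto_norm_zero_cancel)
    have "((\<lambda>h::real. \<bar>h\<bar> powr (p - 1)) \<longlongrightarrow> 0) (at 0)" using p by (intro phi_tendsto_aux) auto
    moreover have "\<bar>h\<bar> powr (p - 1) = norm (psi p h)" for h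
      using powr_mult_base[of "\<bar>h\<bar>" "p-2"] by (simp add: psi_def abs_mult algebra_simps)
    ultimately show "((\<lambda>h. norm (psi p h)) \<longlongrightarrow> 0) (at 0)" by simp
  qed
  moreover have "psi p 0 = 0" by (simp add: psi_def)
  ultimately show ?thesis using True by (simp add: isCont_def)
qed

lemma psi_continuous_on: "p \<ge> 2 \<Longrightarrow> continuous_on S (psi p)"
  by (simp add: continuous_at_imp_continuous_on psi_cont)

lemma phi_continuous_on: "p > 0 \<Longrightarrow> continuous_on S (phi p)"
  unfolding phi_def by (intro continuous_on_powr' continuous_intros) auto


lemma integrable_Icc_cont:
  fixes g :: "real \<Rightarrow> real"
  assumes "continuous_on {a..b} g"
  shows "integrable lborel (\<lambda>t. indicator {a..b} t * g t)"
  using borel_integrable_atLeastAtMost'[OF assms] by (simp add: set_integrable_def)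

lemma cont_comp_psi: "p \<ge> 2 \<Longrightarrow> continuous_on S u \<Longrightarrow> continuous_on S (\<lambda>t. psi p (u t))"
  by (rule continuous_on_compose2[OF psi_continuous_on[of p UNIV]]) auto

lemma cont_comp_phi: "p \<ge> 2 \<Longrightarrow> continuous_on S u \<Longrightarrow> continuous_on S (\<lambda>t. phi p (u t))"
  by (rule continuous_on_compose2[OF phi_continuous_on[of p UNIV]]) auto

lemma hardy_trunc:
  fixes u u' :: "real \<Rightarrow> real" and p M \<epsilon> T :: real
  assumes p: "p \<ge> 2"
    and der: "\<And>t. (u has_real_derivative u' t) (at t)"
    and cu': "continuous_on UNIV u'"
    and u0: "u 0 = 0"
    and bnd: "\<And>t. \<bar>u' t\<bar> \<le> M"
    and e: "0 < \<epsilon>" "\<epsilon> \<le> T"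
  shows "((p-1)/p) powr p * (\<integral>t. indicator {\<epsilon>..T} t * phi p (u t / t) \<partial>lborel)
     \<le> (\<integral>t. indicator {\<epsilon>..T} t * phi p (u' t) \<partial>lborel) + ((p-1)/p) powr (p-1) * (M powr p * \<epsilon>)"
proof -
  define \<beta> where "\<beta> = (p-1)/p"
  have \<beta>: "\<beta> > 0" "p * \<beta> = p - 1" using p by (auto simp: \<beta>_def)
  have \<beta>p: "\<beta> powr p = \<beta> powr (p-1) * \<beta>" using powr_mult_base[of \<beta> "p-1"] \<beta> by (simp add: algebra_simps)
  have cu: "continuous_on UNIV u" using der by (intro continuous_at_imp_continuous_on) (auto intro: DERIV_isCont)
  define F where "F t = phi p (u t) * t powr (1-p)" for t
  define F' where "F' t = p * psi p (u t) * u' t * t powr (1-p) + (1-p) * t powr (1-p-1) * phi p (u t)" for t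
  have dF: "(F has_real_derivative F' t) (at t)" if t: "t > 0" for t
  proof -
    have "((\<lambda>t. phi p (u t)) has_real_derivative p * psi p (u t) * u' t) (at t)"
      using DERIV_chain2[OF phi_deriv[OF p] der] .
    from DERIV_mult[OF this has_real_derivative_powr[OF t, of "1-p"]] show ?thesis
      unfolding F_def[abs_def] F'_def by simp
  qed
  have point: "phi p (u' t) \<ge> \<beta> powr p * phi p (u t / t) + \<beta> powr (p-1) * F' t" if t: "t > 0" for t
  proof -
    define y where "y = u t / t"
    have uy: "u t = t * y" using t by (simp add: y_def)
    define b where "b = \<beta> * y"
    have c: "phi p (u' t) \<ge> phi p b + p * psi p b * (u' t - b)" by (rule convex_phi[OF p])
    have pb: "phi p b = \<beta> powr p * phi p y" unfolding b_def phi_mult using \<beta> by simp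
    have sb: "psi p b = \<beta> powr (p-1) * psi p y" unfolding b_def using \<beta> by (simp add: psi_mult_pos)
    have sbb: "psi p b * b = phi p b" by (rule psi_times)
    have t1: "t powr (p-1) * t powr (1-p) = 1" using t by (simp add: powr_add[symmetric])
    have t2: "t powr (1-p-1) * t powr p = 1" using t by (simp add: powr_add[symmetric])
    have F'y: "F' t = p * psi p y * u' t + (1-p) * phi p y"
    proof -
      have "F' t = p * psi p y * u' t * (t powr (p-1) * t powr (1-p)) + (1-p) * phi p y * (t powr (1-p-1) * t powr p)"
        unfolding F'_def uy phi_mult psi_mult_pos[OF less_imp_le[OF t]] using t by (simp add: algebra_simps)
      then show ?thesis unfolding t1 t2 by simp
    qed
    have "phi p b + p * psi p b * (u' t - b) = phi p b + p * psi p b * u' t - p * (psi p b * b)"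
      by (simp add: algebra_simps)
    also have "\<dots> = \<beta> powr p * phi p y + p * \<beta> powr (p-1) * psi p y * u' t - p * \<beta> powr p * phi p y"
      unfolding sbb unfolding pb sb by (simp add: algebra_simps)
    also have "\<dots> = \<beta> powr p * phi p y + \<beta> powr (p-1) * F' t"
    proof -
      have e: "p * (\<beta> powr (p-1) * phi p y) = (1 + \<beta>*p) * (\<beta> powr (p-1) * phi p y)" using \<beta>(2) by (simp add: algebra_simps)
      show ?thesis unfolding F'y \<beta>p using e by (simp add: algebra_simps)
    qed
    finally show ?thesis using c by (simp add: y_def)
  qed
  have cF': "continuous_on {\<epsilon>..T} F'"
    unfolding F'_def using e p
    by (intro continuous_intros cont_comp_psi cont_comp_phi continuous_on_subset[OF cu] continuous_on_subset[OF cu']) auto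
  have cg1: "continuous_on {\<epsilon>..T} (\<lambda>t. phi p (u' t))" using p by (intro cont_comp_phi continuous_on_subset[OF cu']) auto
  have cg2: "continuous_on {\<epsilon>..T} (\<lambda>t. phi p (u t / t))" using p e
    by (intro cont_comp_phi continuous_intros continuous_on_subset[OF cu]) auto
  have i1: "integrable lborel (\<lambda>t. indicator {\<epsilon>..T} t * phi p (u' t))" by (rule integrable_Icc_cont[OF cg1])
  have i2: "integrable lborel (\<lambda>t. indicator {\<epsilon>..T} t * phi p (u t / t))" by (rule integrable_Icc_cont[OF cg2])
  have i3: "integrable lborel (\<lambda>t. indicator {\<epsilon>..T} t * F' t)" by (rule integrable_Icc_cont[OF cF'])
  have ftc: "(\<integral>t. indicator {\<epsilon>..T} t * F' t \<partial>lborel) = F T - F \<epsilon>"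
  proof -
    have "(\<integral>t. indicator {\<epsilon>..T} t *\<^sub>R F' t \<partial>lborel) = F T - F \<epsilon>"
    proof (rule integral_FTC_atLeastAtMost[OF e(2) _ cF'])
      fix x assume "\<epsilon> \<le> x" "x \<le> T"
      then have "x > 0" using e by simp
      from dF[OF this] show "(F has_vector_derivative F' x) (at x within {\<epsilon>..T})"
        by (simp add: has_real_derivative_iff_has_vector_derivative has_vector_derivative_at_within)
    qed
    then show ?thesis by simp
  qed
  have "(\<integral>t. \<beta> powr p * (indicator {\<epsilon>..T} t * phi p (u t / t)) + \<beta> powr (p-1) * (indicator {\<epsilon>..T} t * F' t) \<partial>lborel)
      \<le> (\<integral>t. indicator {\<epsilon>..T} t * phi p (u' t) \<partial>lborel)"
  proof (rule integral_mono)
    show "integrable lborel (\<lambda>t. \<beta> powr p * (indicator {\<epsilon>..T} t * phi p (u t / t)) + \<beta> powr (p-1) * (indicator {\<epsilon>..T} t * F' t))"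
      using i2 i3 by auto
    show "integrable lborel (\<lambda>t. indicator {\<epsilon>..T} t * phi p (u' t))" by (rule i1)
    fix t show "\<beta> powr p * (indicator {\<epsilon>..T} t * phi p (u t / t)) + \<beta> powr (p-1) * (indicator {\<epsilon>..T} t * F' t)
       \<le> indicator {\<epsilon>..T} t * phi p (u' t)"
      using point[of t] e by (auto simp: indicator_def)
  qed
  also have "(\<integral>t. \<beta> powr p * (indicator {\<epsilon>..T} t * phi p (u t / t)) + \<beta> powr (p-1) * (indicator {\<epsilon>..T} t * F' t) \<partial>lborel)
     = \<beta> powr p * (\<integral>t. indicator {\<epsilon>..T} t * phi p (u t / t) \<partial>lborel) + \<beta> powr (p-1) * (F T - F \<epsilon>)"
    using i2 i3 ftc by simp
  finally have main: "\<beta> powr p * (\<integral>t. indicator {\<epsilon>..T} t * phi p (u t / t) \<partial>lborel) + \<beta> powr (p-1) * (F T - F \<epsilon>)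
     \<le> (\<integral>t. indicator {\<epsilon>..T} t * phi p (u' t) \<partial>lborel)" .
  have FT: "F T \<ge> 0" by (simp add: F_def phi_def)
  have ue: "\<bar>u \<epsilon>\<bar> \<le> M * \<epsilon>"
  proof -
    obtain z where "u \<epsilon> - u 0 = (\<epsilon> - 0) * u' z" using MVT2[OF e(1), of u u'] der by blast
    then have "\<bar>u \<epsilon>\<bar> = \<epsilon> * \<bar>u' z\<bar>" using u0 e by (simp add: abs_mult)
    also have "\<dots> \<le> \<epsilon> * M" using bnd[of z] e by (intro mult_left_mono) auto
    finally show ?thesis by (simp add: mult.commute)
  qed
  have M0: "M \<ge> 0" using bnd[of 0] by simp
  have Fe: "F \<epsilon> \<le> M powr p * \<epsilon>"
  proof -
    have "phi p (u \<epsilon>) \<le> (M * \<epsilon>) powr p" unfolding phi_def using ue p by (intro powr_mono2) auto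
    also have "\<dots> = M powr p * \<epsilon> powr p" using M0 e by (simp add: powr_mult)
    finally have "F \<epsilon> \<le> M powr p * \<epsilon> powr p * \<epsilon> powr (1-p)" unfolding F_def by (intro mult_right_mono) auto
    also have "\<dots> = M powr p * \<epsilon>" using e by (simp add: mult.assoc powr_add[symmetric])
    finally show ?thesis .
  qed
  have "\<beta> powr (p-1) * F \<epsilon> \<le> \<beta> powr (p-1) * (M powr p * \<epsilon>)" using Fe by (intro mult_left_mono) auto
  moreover have "0 \<le> \<beta> powr (p-1) * F T" using FT by simp
  ultimately show ?thesis using main unfolding \<beta>_def by (simp add: algebra_simps)
qed


lemma phi_meas[measurable]: "p > 0 \<Longrightarrow> phi p \<in> borel_measurable borel"
  by (rule borel_measurable_continuous_onI[OF phi_continuous_on])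

lemma hardy_half:
  fixes u u' :: "real \<Rightarrow> real" and p M :: real
  assumes p: "p \<ge> 2"
    and der: "\<And>t. (u has_real_derivative u' t) (at t)"
    and cu': "continuous_on UNIV u'"
    and u0: "u 0 = 0"
    and bnd: "\<And>t. \<bar>u' t\<bar> \<le> M"
  shows "ennreal (((p-1)/p) powr p) * (\<integral>\<^sup>+ t. ennreal (indicator {0<..} t * phi p (u t / t)) \<partial>lborel)
     \<le> (\<integral>\<^sup>+ t. ennreal (indicator {0<..} t * phi p (u' t)) \<partial>lborel)"
proof -
  define \<beta> where "\<beta> = (p-1)/p"
  have \<beta>: "\<beta> > 0" using p by (auto simp: \<beta>_def)
  define J where "J = (\<integral>\<^sup>+ t. ennreal (indicator {0<..} t * phi p (u' t)) \<partial>lborel)"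
  have cu: "continuous_on UNIV u" using der by (intro continuous_at_imp_continuous_on) (auto intro: DERIV_isCont)
  have [measurable]: "u \<in> borel_measurable borel" by (rule borel_measurable_continuous_onI[OF cu])
  have [measurable]: "u' \<in> borel_measurable borel" by (rule borel_measurable_continuous_onI[OF cu'])
  have p0: "p > 0" using p by simp
  show ?thesis
  proof (cases "J = \<infinity>")
    case True then show ?thesis by (simp add: J_def[symmetric])
  next
    case False
    define Jr where "Jr = enn2real J"
    have JJ: "J = ennreal Jr" using False by (simp add: Jr_def ennreal_enn2real_if)
    define e where "e n = 1 / (real n + 1)" for n :: nat
    define T where "T n = real n + 1" for n :: nat
    have eT: "0 < e n" "e n \<le> T n" for n
      by (auto simp: e_def T_def field_simps)
    define X where "X n = (\<integral>t. indicator {e n..T n} t * phi p (u t / t) \<partial>lborel)" for n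
    define Y where "Y n = (\<integral>t. indicator {e n..T n} t * phi p (u' t) \<partial>lborel)" for n
    have cg1: "continuous_on {e n..T n} (\<lambda>t. phi p (u' t))" for n using p by (intro cont_comp_phi continuous_on_subset[OF cu']) auto
    have cg2: "continuous_on {e n..T n} (\<lambda>t. phi p (u t / t))" for n using p eT[of n]
      by (intro cont_comp_phi continuous_intros continuous_on_subset[OF cu]) auto
    have i1: "integrable lborel (\<lambda>t. indicator {e n..T n} t * phi p (u' t))" for n by (rule integrable_Icc_cont[OF cg1])
    have i2: "integrable lborel (\<lambda>t. indicator {e n..T n} t * phi p (u t / t))" for n by (rule integrable_Icc_cont[OF cg2])
    have YJ: "Y n \<le> Jr" for n
    proof -
      have "ennreal (Y n) = (\<integral>\<^sup>+ t. ennreal (indicator {e n..T n} t * phi p (u' t)) \<partial>lborel)"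
        unfolding Y_def by (rule nn_integral_eq_integral[symmetric, OF i1]) (auto simp: phi_nonneg)
      also have "\<dots> \<le> J" unfolding J_def
        using eT[of n] by (intro nn_integral_mono) (auto simp: indicator_def phi_nonneg)
      finally have "ennreal (Y n) \<le> ennreal Jr" unfolding JJ .
      moreover have "0 \<le> Jr" by (simp add: Jr_def)
      ultimately show ?thesis by (auto simp: ennreal_le_iff2)
    qed
    have Xmono: "X n \<le> X m" if "n \<le> m" for n m
    proof -
      have "e m \<le> e n" "T n \<le> T m" using that by (auto simp: e_def T_def field_simps)
      then show ?thesis unfolding X_def using i2
        by (intro integral_mono) (auto simp: indicator_def phi_nonneg)
    qed
    have XJ: "\<beta> powr p * X n \<le> Jr" for n
    proof (rule field_le_epsilon)
      fix d :: real assume d: "0 < d"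
      define C where "C = \<beta> powr (p-1) * M powr p"
      have C0: "C \<ge> 0" by (simp add: C_def)
      obtain m where m: "real m > C / d" using reals_Archimedean2 by blast
      define m' where "m' = max m n"
      have "C * e m' \<le> d"
      proof -
        have "C / d < real m' + 1" using m by (simp add: m'_def)
        then have "C < d * (real m' + 1)" using d by (simp add: field_simps)
        then show ?thesis by (simp add: e_def field_simps)
      qed
      have "\<beta> powr p * X n \<le> \<beta> powr p * X m'" using Xmono[of n m'] \<beta> by (intro mult_left_mono) (auto simp: m'_def)
      also have "\<dots> \<le> Y m' + \<beta> powr (p-1) * (M powr p * e m')"
        unfolding X_def Y_def \<beta>_def by (rule hardy_trunc[OF p der cu' u0 bnd eT])
      also have "\<dots> \<le> Jr + d" using YJ[of m'] \<open>C * e m' \<le> d\<close> by (simp add: C_def mult.assoc)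
      finally show "\<beta> powr p * X n \<le> Jr + d" .
    qed
    have sup: "(SUP n. ennreal (indicator {e n..T n} t * phi p (u t / t))) = ennreal (indicator {0<..} t * phi p (u t / t))" for t
    proof (rule antisym)
      show "(SUP n. ennreal (indicator {e n..T n} t * phi p (u t / t))) \<le> ennreal (indicator {0<..} t * phi p (u t / t))"
        using eT by (intro SUP_least) (auto simp: indicator_def phi_nonneg dest: order.strict_trans2[of 0 "e _" t])
      show "ennreal (indicator {0<..} t * phi p (u t / t)) \<le> (SUP n. ennreal (indicator {e n..T n} t * phi p (u t / t)))"
      proof (cases "t > 0")
        case False then show ?thesis by simp
      next
        case True
        obtain n :: nat where n: "real n > max t (1/t)" using reals_Archimedean2 by blast
        have "e n \<le> t" using n True by (simp add: e_def field_simps)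
        moreover have "t \<le> T n" using n by (simp add: T_def)
        ultimately show ?thesis using True by (intro SUP_upper2[of n]) (auto simp: indicator_def)
      qed
    qed
    have "(\<integral>\<^sup>+ t. ennreal (indicator {0<..} t * phi p (u t / t)) \<partial>lborel)
        = (\<integral>\<^sup>+ t. (SUP n. ennreal (indicator {e n..T n} t * phi p (u t / t))) \<partial>lborel)"
      by (simp add: sup)
    also have "\<dots> = (SUP n. \<integral>\<^sup>+ t. ennreal (indicator {e n..T n} t * phi p (u t / t)) \<partial>lborel)"
    proof (rule nn_integral_monotone_convergence_SUP)
      show "incseq (\<lambda>n t. ennreal (indicator {e n..T n} t * phi p (u t / t)))"
      proof (rule incseq_SucI, rule le_funI)
        fix n t
        have "e (Suc n) \<le> e n" "T n \<le> T (Suc n)" by (auto simp: e_def T_def field_simps)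
        then show "ennreal (indicator {e n..T n} t * phi p (u t / t)) \<le> ennreal (indicator {e (Suc n)..T (Suc n)} t * phi p (u t / t))"
          by (auto simp: indicator_def phi_nonneg)
      qed
      show "(\<lambda>t. ennreal (indicator {e n..T n} t * phi p (u t / t))) \<in> borel_measurable lborel" for n
        using p0 by measurable
    qed
    also have "\<dots> = (SUP n. ennreal (X n))"
      unfolding X_def by (intro SUP_cong refl nn_integral_eq_integral i2) (auto simp: phi_nonneg)
    also have "\<dots> \<le> ennreal (Jr / \<beta> powr p)"
      using XJ \<beta> by (intro SUP_least ennreal_leI) (simp add: field_simps mult.commute)
    finally have "ennreal (\<beta> powr p) * (\<integral>\<^sup>+ t. ennreal (indicator {0<..} t * phi p (u t / t)) \<partial>lborel)
       \<le> ennreal (\<beta> powr p) * ennreal (Jr / \<beta> powr p)" by (rule mult_left_mono) simp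
    also have "\<dots> = J"
    proof -
      have "ennreal (\<beta> powr p) * ennreal (Jr / \<beta> powr p) = ennreal (\<beta> powr p * (Jr / \<beta> powr p))"
        by (rule ennreal_mult'[symmetric]) simp
      also have "\<beta> powr p * (Jr / \<beta> powr p) = Jr" using \<beta> by simp
      finally show ?thesis unfolding JJ .
    qed
    finally show ?thesis unfolding J_def \<beta>_def .
  qed
qed


lemma integrable_cs:
  fixes g :: "real \<Rightarrow> real"
  assumes "continuous_on UNIV g" and "\<And>s. s < a \<or> b < s \<Longrightarrow> g s = 0"
  shows "integrable lborel g"
proof -
  have "integrable lborel (\<lambda>t. indicator {a..b} t * g t)"
    by (rule integrable_Icc_cont) (rule continuous_on_subset[OF assms(1)], simp)
  also have "(\<lambda>t. indicator {a..b} t * g t) = g"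
  proof (rule ext)
    fix t show "indicator {a..b} t * g t = g t" using assms(2)[of t] by (cases "t \<in> {a..b}") (auto simp: indicator_def)
  qed
  finally show ?thesis .
qed

lemma shift_deriv:
  assumes "\<And>s. (v has_real_derivative v' s) (at s)"
  shows "((\<lambda>t. v (s0 + c * t) - v s0) has_real_derivative c * v' (s0 + c * t)) (at t)"
proof -
  have "((\<lambda>t. s0 + c * t) has_real_derivative c) (at t)" by (auto intro!: derivative_eq_intros)
  from DERIV_chain2[OF assms this] have "((\<lambda>t. v (s0 + c * t)) has_real_derivative v' (s0 + c * t) * c) (at t)" .
  then show ?thesis by (auto intro!: derivative_eq_intros simp: mult.commute)
qed

locale oned =
  fixes v v' :: "real \<Rightarrow> real" and p k a b :: real
  assumes p: "p \<ge> 2" and k: "k > 0" and ab: "a \<le> b"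
    and der: "\<And>s. (v has_real_derivative v' s) (at s)"
    and cv': "continuous_on UNIV v'"
    and supp: "\<And>s. s \<le> a \<or> b \<le> s \<Longrightarrow> v s = 0"
begin

lemma p0: "p > 0" using p by simp

lemma cv: "continuous_on UNIV v"
  using der by (intro continuous_at_imp_continuous_on) (auto intro: DERIV_isCont)

lemma meas_v[measurable]: "v \<in> borel_measurable borel" by (rule borel_measurable_continuous_onI[OF cv])
lemma meas_v'[measurable]: "v' \<in> borel_measurable borel" by (rule borel_measurable_continuous_onI[OF cv'])

lemma supp': assumes "s < a \<or> b < s" shows "v' s = 0"
proof -
  have "((\<lambda>_. 0) has_real_derivative 0) (at s)" by simp
  moreover have "open (if s < a then {..<a} else {b<..})" by auto
  moreover have "s \<in> (if s < a then {..<a} else {b<..})" using assms by auto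
  moreover have "\<And>x. x \<in> (if s < a then {..<a} else {b<..}) \<Longrightarrow> 0 = v x"
    using supp by (auto split: if_splits)
  ultimately have "(v has_real_derivative 0) (at s)" by (rule has_field_derivative_transform_within_open)
  then show ?thesis using der[of s] DERIV_unique by blast
qed

lemma supp2: "s < a \<or> b < s \<Longrightarrow> v s = 0" using supp by auto

lemma int_A: "integrable lborel (\<lambda>s. phi p (v' s + k * v s))"
  apply (rule integrable_cs[where a=a and b=b])
   apply (intro cont_comp_phi[OF p] continuous_intros cv cv')
  apply (simp add: supp2 supp' phi_def)
  done

lemma int_B: "integrable lborel (\<lambda>s. phi p (v s))"
  apply (rule integrable_cs[where a=a and b=b])
   apply (intro cont_comp_phi[OF p] continuous_intros cv cv')
  apply (simp add: supp2 supp' phi_def)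
  done

lemma int_V: "integrable lborel (\<lambda>s. phi p (v' s))"
  apply (rule integrable_cs[where a=a and b=b])
   apply (intro cont_comp_phi[OF p] continuous_intros cv cv')
  apply (simp add: supp2 supp' phi_def)
  done

lemma int_D: "integrable lborel (\<lambda>s. p * k powr (p-1) * (psi p (v s) * v' s))"
  apply (rule integrable_cs[where a=a and b=b])
   apply (intro cont_comp_psi[OF p] continuous_intros cv cv')
  apply (simp add: supp2 supp' psi_def)
  done

lemma int_deriv_zero: "(\<integral>s. psi p (v s) * v' s \<partial>lborel) = 0"
proof -
  have "(\<integral>s. indicator {a..b} s *\<^sub>R (p * (psi p (v s) * v' s)) \<partial>lborel) = phi p (v b) - phi p (v a)"
  proof (rule integral_FTC_atLeastAtMost[OF ab])
    fix x
    have "((\<lambda>s. phi p (v s)) has_real_derivative p * psi p (v x) * v' x) (at x)"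
      using DERIV_chain2[OF phi_deriv[OF p] der] .
    then show "((\<lambda>s. phi p (v s)) has_vector_derivative p * (psi p (v x) * v' x)) (at x within {a..b})"
      by (simp add: has_real_derivative_iff_has_vector_derivative has_vector_derivative_at_within mult.assoc)
  next
    show "continuous_on {a..b} (\<lambda>s. p * (psi p (v s) * v' s))" using p
      by (intro continuous_intros cont_comp_psi continuous_on_subset[OF cv] continuous_on_subset[OF cv']) auto
  qed
  also have "\<dots> = 0" using supp[of a] supp[of b] by (simp add: phi_def)
  also have "(\<lambda>s. indicator {a..b} s *\<^sub>R (p * (psi p (v s) * v' s))) = (\<lambda>s. p * (psi p (v s) * v' s))"
  proof (rule ext)
    fix t show "indicator {a..b} t *\<^sub>R (p * (psi p (v t) * v' t)) = p * (psi p (v t) * v' t)"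
      using supp'[of t] by (cases "t \<in> {a..b}") (auto simp: indicator_def)
  qed
  finally show ?thesis using p by simp
qed

lemma bochner_main:
  "k powr p * (\<integral>s. phi p (v s) \<partial>lborel) + cp p * (\<integral>s. phi p (v' s) \<partial>lborel) \<le> (\<integral>s. phi p (v' s + k * v s) \<partial>lborel)"
proof -
  have point: "k powr p * phi p (v s) + p * k powr (p-1) * (psi p (v s) * v' s) + cp p * phi p (v' s) \<le> phi p (v' s + k * v s)" for s
  proof -
    have e: "phi p (v' s - (- k * v s)) \<ge> phi p (- k * v s) - p * psi p (- k * v s) * v' s + cp p * phi p (v' s)"
      by (rule elem_ineq[OF p])
    have "phi p (- k * v s) = k powr p * phi p (v s)" using k phi_mult[of p "-k" "v s"] by simp
    moreover have "psi p (- k * v s) = - (k powr (p-1) * psi p (v s))"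
      using psi_neg[of p "k * v s"] psi_mult_pos[of k p "v s"] k by simp
    ultimately show ?thesis using e by (simp add: algebra_simps)
  qed
  have "(\<integral>s. k powr p * phi p (v s) + p * k powr (p-1) * (psi p (v s) * v' s) + cp p * phi p (v' s) \<partial>lborel)
      \<le> (\<integral>s. phi p (v' s + k * v s) \<partial>lborel)"
    using int_A int_B int_D int_V point by (intro integral_mono) auto
  also have "(\<integral>s. k powr p * phi p (v s) + p * k powr (p-1) * (psi p (v s) * v' s) + cp p * phi p (v' s) \<partial>lborel)
     = k powr p * (\<integral>s. phi p (v s) \<partial>lborel) + p * k powr (p-1) * (\<integral>s. psi p (v s) * v' s \<partial>lborel) + cp p * (\<integral>s. phi p (v' s) \<partial>lborel)"
  proof -
    have i: "integrable lborel (\<lambda>s. psi p (v s) * v' s)"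
      apply (rule integrable_cs[where a=a and b=b])
       apply (intro cont_comp_psi[OF p] continuous_intros cv cv')
      apply (simp add: supp2 supp' psi_def)
      done
    show ?thesis using int_B int_V i by simp
  qed
  finally show ?thesis unfolding int_deriv_zero by simp
qed

end


context oned begin

lemma bound_v': obtains M where "\<And>s. \<bar>v' s\<bar> \<le> M"
proof -
  have "bounded (v' ` {a..b})"
    by (rule compact_imp_bounded[OF compact_continuous_image[OF continuous_on_subset[OF cv'] compact_Icc]]) simp
  then obtain M where M0: "\<forall>x\<in>{a..b}. \<bar>v' x\<bar> \<le> M" by (auto simp: bounded_iff)
  then have M: "\<And>x. x \<in> {a..b} \<Longrightarrow> \<bar>v' x\<bar> \<le> M" by blast
  have "0 \<le> M" using M[of a] ab by (auto intro: order_trans[OF abs_ge_zero])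
  then have "\<bar>v' s\<bar> \<le> M" for s using M[of s] supp'[of s] by (cases "s \<in> {a..b}") auto
  then show ?thesis using that by blast
qed

definition hh :: "real \<Rightarrow> real \<Rightarrow> real" where
  "hh s0 s = phi p (v s - v s0) / \<bar>s - s0\<bar> powr p"

lemma hh_meas[measurable]: "hh s0 \<in> borel_measurable borel"
  unfolding hh_def using p0 by measurable

lemma half_c:
  fixes s0 c :: real
  assumes c: "c = 1 \<or> c = -1"
  defines "S \<equiv> (if c = 1 then {s0<..} else {..<s0})"
  shows "ennreal (((p-1)/p) powr p) * (\<integral>\<^sup>+ s. ennreal (indicator S s * hh s0 s) \<partial>lborel)
     \<le> (\<integral>\<^sup>+ s. ennreal (indicator S s * phi p (v' s)) \<partial>lborel)"
proof -
  obtain M where M: "\<And>s. \<bar>v' s\<bar> \<le> M" using bound_v' by blast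
  have c0: "c \<noteq> 0" "\<bar>c\<bar> = 1" using c by auto
  have ind: "indicator S (s0 + c * x) = (indicator {0<..} x :: real)" for x
    using c by (auto simp: S_def indicator_def)
  have [measurable]: "S \<in> sets borel" by (simp add: S_def)
  have h: "hh s0 (s0 + c * x) = phi p ((v (s0 + c * x) - v s0) / x)" if "x > 0" for x
  proof -
    have "phi p ((v (s0 + c * x) - v s0) / x) = \<bar>1/x\<bar> powr p * phi p (v (s0 + c * x) - v s0)"
      using phi_mult[of p "1/x"] by simp
    also have "\<bar>1/x\<bar> powr p = 1 / \<bar>s0 + c * x - s0\<bar> powr p" using that c0 by (simp add: abs_mult powr_divide)
    finally show ?thesis by (simp add: hh_def)
  qed
  have "(\<integral>\<^sup>+ s. ennreal (indicator S s * hh s0 s) \<partial>lborel)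
      = \<bar>c\<bar> * (\<integral>\<^sup>+ x. ennreal (indicator S (s0 + c * x) * hh s0 (s0 + c * x)) \<partial>lborel)"
    by (rule nn_integral_real_affine[OF _ c0(1)]) measurable
  also have "\<dots> = (\<integral>\<^sup>+ x. ennreal (indicator {0<..} x * phi p ((v (s0 + c * x) - v s0) / x)) \<partial>lborel)"
    unfolding c0(2) ind ennreal_1 mult_1 by (intro nn_integral_cong) (auto simp: h indicator_def)
  finally have L: "(\<integral>\<^sup>+ s. ennreal (indicator S s * hh s0 s) \<partial>lborel) = \<dots>" .
  have "(\<integral>\<^sup>+ s. ennreal (indicator S s * phi p (v' s)) \<partial>lborel)
      = \<bar>c\<bar> * (\<integral>\<^sup>+ x. ennreal (indicator S (s0 + c * x) * phi p (v' (s0 + c * x))) \<partial>lborel)"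
    using p0 by (intro nn_integral_real_affine[OF _ c0(1)]) measurable
  also have "\<dots> = (\<integral>\<^sup>+ x. ennreal (indicator {0<..} x * phi p (c * v' (s0 + c * x))) \<partial>lborel)"
    unfolding c0(2) ind phi_mult by simp
  finally have R: "(\<integral>\<^sup>+ s. ennreal (indicator S s * phi p (v' s)) \<partial>lborel) = \<dots>" .
  have "ennreal (((p-1)/p) powr p) * (\<integral>\<^sup>+ x. ennreal (indicator {0<..} x * phi p ((v (s0 + c * x) - v s0) / x)) \<partial>lborel)
      \<le> (\<integral>\<^sup>+ x. ennreal (indicator {0<..} x * phi p (c * v' (s0 + c * x))) \<partial>lborel)"
  proof (rule hardy_half[OF p shift_deriv[OF der]])
    show "continuous_on UNIV (\<lambda>t. c * v' (s0 + c * t))"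
      by (intro continuous_intros continuous_on_compose2[OF cv']) auto
    show "v (s0 + c * 0) - v s0 = 0" by simp
    show "\<bar>c * v' (s0 + c * t)\<bar> \<le> M" for t using M[of "s0 + c * t"] c0 by (simp add: abs_mult)
  qed
  then show ?thesis unfolding L R .
qed

lemma hardy_full:
  "ennreal (((p-1)/p) powr p) * (\<integral>\<^sup>+ s. ennreal (hh s0 s) \<partial>lborel) \<le> ennreal (\<integral>s. phi p (v' s) \<partial>lborel)"
proof -
  define \<beta> where "\<beta> = ennreal (((p-1)/p) powr p)"
  have split: "ennreal (hh s0 s) = ennreal (indicator {s0<..} s * hh s0 s) + ennreal (indicator {..<s0} s * hh s0 s)" for s
    by (cases s s0 rule: linorder_cases) (auto simp: hh_def indicator_def)
  have "(\<integral>\<^sup>+ s. ennreal (hh s0 s) \<partial>lborel)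
     = (\<integral>\<^sup>+ s. ennreal (indicator {s0<..} s * hh s0 s) \<partial>lborel) + (\<integral>\<^sup>+ s. ennreal (indicator {..<s0} s * hh s0 s) \<partial>lborel)"
    unfolding split by (rule nn_integral_add) measurable
  then have "\<beta> * (\<integral>\<^sup>+ s. ennreal (hh s0 s) \<partial>lborel)
     = \<beta> * (\<integral>\<^sup>+ s. ennreal (indicator {s0<..} s * hh s0 s) \<partial>lborel) + \<beta> * (\<integral>\<^sup>+ s. ennreal (indicator {..<s0} s * hh s0 s) \<partial>lborel)"
    by (simp add: distrib_left)
  also have "\<dots> \<le> (\<integral>\<^sup>+ s. ennreal (indicator {s0<..} s * phi p (v' s)) \<partial>lborel) + (\<integral>\<^sup>+ s. ennreal (indicator {..<s0} s * phi p (v' s)) \<partial>lborel)"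
    using half_c[of 1 s0] half_c[of "-1" s0] unfolding \<beta>_def by (intro add_mono) auto
  also have "\<dots> = (\<integral>\<^sup>+ s. ennreal (indicator {s0<..} s * phi p (v' s)) + ennreal (indicator {..<s0} s * phi p (v' s)) \<partial>lborel)"
    using p0 by (intro nn_integral_add[symmetric]) measurable
  also have "\<dots> \<le> (\<integral>\<^sup>+ s. ennreal (phi p (v' s)) \<partial>lborel)"
    by (intro nn_integral_mono) (auto simp: indicator_def phi_nonneg)
  also have "\<dots> = ennreal (\<integral>s. phi p (v' s) \<partial>lborel)"
    by (rule nn_integral_eq_integral[OF int_V]) (simp add: phi_nonneg)
  finally show ?thesis unfolding \<beta>_def .
qed

lemma oned_final:
  "ennreal (cp p * ((p-1)/p) powr p) * (\<integral>\<^sup>+ s. ennreal (hh s0 s) \<partial>lborel)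
    \<le> ennreal ((\<integral>s. phi p (v' s + k * v s) \<partial>lborel) - k powr p * (\<integral>s. phi p (v s) \<partial>lborel))"
proof -
  have "ennreal (cp p * ((p-1)/p) powr p) * (\<integral>\<^sup>+ s. ennreal (hh s0 s) \<partial>lborel)
     = ennreal (cp p) * (ennreal (((p-1)/p) powr p) * (\<integral>\<^sup>+ s. ennreal (hh s0 s) \<partial>lborel))"
    using cp_nonneg[OF p] by (simp add: ennreal_mult mult.assoc)
  also have "\<dots> \<le> ennreal (cp p) * ennreal (\<integral>s. phi p (v' s) \<partial>lborel)"
    by (intro mult_left_mono hardy_full) simp
  also have "\<dots> = ennreal (cp p * (\<integral>s. phi p (v' s) \<partial>lborel))"
    by (rule ennreal_mult'[symmetric]) (rule cp_nonneg[OF p])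
  also have "\<dots> \<le> ennreal ((\<integral>s. phi p (v' s + k * v s) \<partial>lborel) - k powr p * (\<integral>s. phi p (v s) \<partial>lborel))"
    using bochner_main by (intro ennreal_leI) simp
  finally show ?thesis .
qed

end


lemma dil_inner: "b \<in> Basis \<Longrightarrow> dil nu l x \<bullet> b = l powr nu b * (x \<bullet> b)"
  by (simp add: dil_def inner_sum_left inner_Basis if_distrib cong: if_cong)

lemma dil_dil: "0 < l \<Longrightarrow> 0 < m \<Longrightarrow> dil nu l (dil nu m x) = dil nu (l*m) x"
  by (rule euclidean_eqI) (simp add: dil_inner powr_mult)

lemma dil_one: "dil nu 1 x = x"
  by (rule euclidean_eqI) (simp add: dil_inner)

lemma dil_zero: "dil nu l 0 = 0"
  by (rule euclidean_eqI) (simp add: dil_inner)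

lemma dil_cont: "continuous_on UNIV (dil nu l)"
  unfolding dil_def by (intro continuous_intros)

lemma dil_meas[measurable]: "dil nu l \<in> borel_measurable borel"
  by (rule borel_measurable_continuous_onI[OF dil_cont])

locale qn =
  fixes nu :: "'a::euclidean_space \<Rightarrow> real" and N :: "'a \<Rightarrow> real"
  assumes nu_pos: "\<And>b. b \<in> Basis \<Longrightarrow> nu b > 0"
    and N: "hom_quasi_norm nu N"
begin

abbreviation "Q \<equiv> hom_dim nu"

lemma Q_pos: "Q > 0"
  unfolding hom_dim_def by (rule sum_pos) (auto simp: nu_pos)

lemma N_cont: "continuous_on UNIV N" and N_nonneg: "N x \<ge> 0" and N_zero: "N x = 0 \<longleftrightarrow> x = 0"
  and N_dil: "l > 0 \<Longrightarrow> N (dil nu l x) = l * N x"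
  using N by (auto simp: hom_quasi_norm_def)

lemma N_pos: "x \<noteq> 0 \<Longrightarrow> N x > 0" using N_nonneg[of x] N_zero[of x] by auto

lemma N_meas[measurable]: "N \<in> borel_measurable borel"
  by (rule borel_measurable_continuous_onI[OF N_cont])

lemma lborel_dil:
  assumes l: "l > 0" and A: "A \<in> sets borel"
  shows "emeasure lborel A = ennreal (l powr Q) * emeasure lborel (dil nu l -` A)"
proof -
  have "lborel = density (distr lborel borel (\<lambda>x. 0 + (\<Sum>j\<in>Basis. (l powr nu j * (x \<bullet> j)) *\<^sub>R j))) (\<lambda>_. (\<Prod>j\<in>Basis. \<bar>l powr nu j\<bar>))"
    by (rule lborel_affine_euclidean) (use l in auto)
  also have "(\<lambda>x. 0 + (\<Sum>j\<in>Basis. (l powr nu j * (x \<bullet> j)) *\<^sub>R j)) = dil nu l"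
    by (simp add: dil_def fun_eq_iff)
  also have "(\<Prod>j\<in>Basis. \<bar>l powr nu j\<bar>) = l powr Q"
    using l by (simp add: hom_dim_def powr_sum)
  finally have eqM: "lborel = density (distr lborel borel (dil nu l)) (\<lambda>_. ennreal (l powr Q))" .
  have "emeasure (density (distr lborel borel (dil nu l)) (\<lambda>_. ennreal (l powr Q))) A
      = (\<integral>\<^sup>+ x. ennreal (l powr Q) * indicator A x \<partial>distr lborel borel (dil nu l))"
    using A by (intro emeasure_density) auto
  also have "\<dots> = ennreal (l powr Q) * emeasure (distr lborel borel (dil nu l)) A"
    using A by (simp add: nn_integral_cmult_indicator)
  also have "\<dots> = ennreal (l powr Q) * emeasure lborel (dil nu l -` A)"
    using A by (simp add: emeasure_distr)
  finally show ?thesis using arg_cong[of _ _ "\<lambda>M. emeasure M A", OF eqM] by simp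
qed

end


context qn begin

lemma dil_tendsto0: "((\<lambda>l. dil nu l x) \<longlongrightarrow> 0) (at_right 0)"
proof -
  have "((\<lambda>l. (\<Sum>b\<in>Basis. (l powr nu b * (x \<bullet> b)) *\<^sub>R b)) \<longlongrightarrow> (\<Sum>b\<in>Basis. (0 * (x \<bullet> b)) *\<^sub>R b)) (at_right 0)"
  proof (intro tendsto_intros)
    fix b :: 'a assume b: "b \<in> Basis"
    show "((\<lambda>l. l powr nu b) \<longlongrightarrow> 0) (at_right 0)"
      using nu_pos[OF b] by (intro tendsto_zero_powrI) (auto simp: eventually_at_right_field intro: tendsto_ident_at exI[of _ 1])
  qed
  then show ?thesis by (simp add: dil_def)
qed

lemma N_lower: obtains m where "m > 0" "\<And>x. norm x \<ge> 1 \<Longrightarrow> N x \<ge> m"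
proof -
  have c: "compact (sphere (0::'a) 1)" by simp
  obtain b :: 'a where b: "b \<in> Basis" using nonempty_Basis by blast
  then have "b \<in> sphere 0 1" by simp
  then have ne: "sphere (0::'a) 1 \<noteq> {}" by blast
  have co: "continuous_on (sphere 0 1) N" by (rule continuous_on_subset[OF N_cont]) simp
  from continuous_attains_inf[OF c ne co] obtain y where y1: "y \<in> sphere 0 1" and y2: "\<forall>z\<in>sphere 0 1. N y \<le> N z"
    by blast
  have y: "y \<in> sphere 0 1" "\<And>z. z \<in> sphere 0 1 \<Longrightarrow> N y \<le> N z" using y1 y2 by auto
  have m: "N y > 0" using y(1) by (intro N_pos) auto
  have "N x \<ge> N y" if x: "norm x \<ge> 1" for x
  proof (cases "norm x = 1")
    case True then show ?thesis using y(2)[of x] by simp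
  next
    case False
    then have x1: "norm x > 1" using x by simp
    have "((\<lambda>l. norm (dil nu l x)) \<longlongrightarrow> 0) (at_right 0)" using tendsto_norm[OF dil_tendsto0[of x]] by simp
    then have "\<forall>\<^sub>F l in at_right 0. norm (dil nu l x) < 1" by (rule order_tendstoD) simp
    then obtain b where b0: "b > 0" and b1: "\<forall>l>0. l < b \<longrightarrow> norm (dil nu l x) < 1"
      unfolding eventually_at_right_field by blast
    have b: "b > 0" "\<And>l. 0 < l \<Longrightarrow> l < b \<Longrightarrow> norm (dil nu l x) < 1" using b0 b1 by auto
    define \<delta> where "\<delta> = min (b/2) (1/2)"
    have d: "0 < \<delta>" "\<delta> < b" "\<delta> \<le> 1" using b by (auto simp: \<delta>_def)
    have "\<exists>l. \<delta> \<le> l \<and> l \<le> 1 \<and> norm (dil nu l x) = 1"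
    proof (rule IVT')
      show "norm (dil nu \<delta> x) \<le> 1" using b(2)[OF d(1,2)] by simp
      show "1 \<le> norm (dil nu 1 x)" using x1 by (simp add: dil_one)
      show "\<delta> \<le> 1" by fact
      show "continuous_on {\<delta>..1} (\<lambda>l. norm (dil nu l x))"
        unfolding dil_def
        by (intro continuous_on_norm continuous_on_sum continuous_on_scaleR continuous_on_mult continuous_on_powr
            continuous_on_id continuous_on_const) (use d in auto)
    qed
    then obtain l where l: "\<delta> \<le> l" "l \<le> 1" "norm (dil nu l x) = 1" by blast
    have lp: "l > 0" using l d by simp
    have "N y \<le> N (dil nu l x)" using y(2) l(3) by simp
    also have "\<dots> = l * N x" by (rule N_dil[OF lp])
    also have "\<dots> \<le> N x" using l(2) N_nonneg[of x] mult_right_mono[of l 1 "N x"] by simp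
    finally show ?thesis .
  qed
  then show ?thesis by (rule that[OF m])
qed

lemma ball_sets[measurable]: "{x. N x < r} \<in> sets borel" by measurable

lemma ball_scale: assumes r: "r > 0"
  shows "emeasure lborel {x. N x < r} = ennreal (r powr Q) * emeasure lborel {x. N x < 1}"
proof -
  have "dil nu r -` {x. N x < r} = {x. N x < 1}" using r by (auto simp: N_dil)
  then show ?thesis using lborel_dil[OF r ball_sets[of r]] by simp
qed

lemma ball1_finite: "emeasure lborel {x. N x < 1} < \<infinity>"
proof -
  obtain m where m: "m > 0" "\<And>x. norm x \<ge> 1 \<Longrightarrow> N x \<ge> m" using N_lower by blast
  have "{x. N x < m} \<subseteq> ball 0 1" using m(2) by (force simp: not_le[symmetric])
  then have "emeasure lborel {x. N x < m} \<le> emeasure lborel (ball (0::'a) 1)" by (intro emeasure_mono) auto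
  also have "\<dots> < \<infinity>" by (rule emeasure_lborel_ball_finite)
  finally have "ennreal (m powr Q) * emeasure lborel {x. N x < 1} < \<infinity>" using ball_scale[OF m(1)] by simp
  then show ?thesis using m(1) by (auto simp: ennreal_mult_less_top)
qed

definition V1 :: real where "V1 = enn2real (emeasure lborel {x. N x < 1})"

lemma V1_eq: "emeasure lborel {x. N x < 1} = ennreal V1" and V1_nonneg: "V1 \<ge> 0"
  using ball1_finite by (auto simp: V1_def ennreal_enn2real_if)

definition wt :: "real \<Rightarrow> real" where "wt s = Q * V1 * exp (- Q * s)"

lemma wt_nonneg: "wt s \<ge> 0" using Q_pos V1_nonneg by (simp add: wt_def)

lemma distr_eq: "distr lborel borel (\<lambda>x. - ln (N x)) = density lborel (\<lambda>s. ennreal (wt s))"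
proof (rule measure_eqI_lessThan)
  show "sets (distr lborel borel (\<lambda>x. - ln (N x))) = sets borel" by simp
  show "sets (density lborel (\<lambda>s. ennreal (wt s))) = sets borel" by simp
  have eq: "emeasure (distr lborel borel (\<lambda>x. - ln (N x))) {t<..} = ennreal (V1 * exp (- Q * t))" for t
  proof -
    have "emeasure (distr lborel borel (\<lambda>x. - ln (N x))) {t<..} = emeasure lborel {x. t < - ln (N x)}"
      by (subst emeasure_distr) (auto simp: vimage_def)
    also have "\<dots> = emeasure lborel ({x. t < - ln (N x)} - {0})"
      by (rule emeasure_Diff_null_set[symmetric]) (auto intro: finite_imp_null_set_lborel)
    also have "{x. t < - ln (N x)} - {0} = {x. N x < exp (- t)} - {0}"
    proof -
      have "t < - ln (N x) \<longleftrightarrow> N x < exp (- t)" if "x \<noteq> 0" for x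
      proof -
        have "0 < N x" using N_pos[OF that] .
        then have "N x < exp (- t) \<longleftrightarrow> ln (N x) < - t" by (metis exp_less_cancel_iff exp_ln)
        then show ?thesis by linarith
      qed
      then show ?thesis by auto
    qed
    also have "emeasure lborel ({x. N x < exp (- t)} - {0}) = emeasure lborel {x. N x < exp (- t)}"
      by (rule emeasure_Diff_null_set) (auto intro: finite_imp_null_set_lborel)
    also have "\<dots> = ennreal (exp (- t) powr Q) * ennreal V1"
      by (simp add: ball_scale V1_eq)
    also have "exp (- t) powr Q = exp (- Q * t)" by (simp add: powr_def)
    finally show ?thesis using V1_nonneg by (simp add: ennreal_mult mult.commute)
  qed
  show "emeasure (distr lborel borel (\<lambda>x. - ln (N x))) {t<..} < \<infinity>" for t unfolding eq by simp
  show "emeasure (distr lborel borel (\<lambda>x. - ln (N x))) {t<..} = emeasure (density lborel (\<lambda>s. ennreal (wt s))) {t<..}" for t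
  proof -
    have "emeasure (density lborel (\<lambda>s. ennreal (wt s))) {t<..} = (\<integral>\<^sup>+ s. ennreal (wt s) * indicator {t<..} s \<partial>lborel)"
      by (rule emeasure_density) (auto simp: wt_def)
    also have "\<dots> = (\<integral>\<^sup>+ s. ennreal (wt s) * indicator {t..} s \<partial>lborel)"
      by (rule nn_integral_cong_AE) (use AE_lborel_singleton[of t] in \<open>auto elim!: eventually_mono simp: indicator_def\<close>)
    also have "\<dots> = 0 - (- V1 * exp (- Q * t))"
    proof (rule nn_integral_FTC_atLeast)
      show "wt \<in> borel_measurable borel" unfolding wt_def[abs_def] by measurable
      show "((\<lambda>s. - V1 * exp (- Q * s)) has_real_derivative wt x) (at x)" for x
        by (auto intro!: derivative_eq_intros simp: wt_def algebra_simps)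
      show "0 \<le> wt x" for x by (rule wt_nonneg)
      show "((\<lambda>s. - V1 * exp (- Q * s)) \<longlongrightarrow> 0) at_top"
      proof -
        have "filterlim (\<lambda>s. (- Q) * s) at_bot at_top"
          using Q_pos by (intro filterlim_tendsto_neg_mult_at_bot[OF tendsto_const _ filterlim_ident]) auto
        then have "((\<lambda>s. exp ((- Q) * s)) \<longlongrightarrow> 0) at_top" by (rule filterlim_compose[OF exp_at_bot])
        then have "((\<lambda>s. - V1 * exp ((- Q) * s)) \<longlongrightarrow> - V1 * 0) at_top" by (intro tendsto_mult tendsto_const)
        then show ?thesis by simp
      qed
    qed
    finally show ?thesis unfolding eq by simp
  qed
qed

lemma polar:
  assumes [measurable]: "h \<in> borel_measurable borel"
  shows "(\<integral>\<^sup>+ x. h (- ln (N x)) \<partial>lborel) = (\<integral>\<^sup>+ s. ennreal (wt s) * h s \<partial>lborel)"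
proof -
  have "(\<integral>\<^sup>+ x. h (- ln (N x)) \<partial>lborel) = (\<integral>\<^sup>+ s. h s \<partial>distr lborel borel (\<lambda>x. - ln (N x)))"
    by (rule nn_integral_distr[symmetric]) auto
  also have "\<dots> = (\<integral>\<^sup>+ s. ennreal (wt s) * h s \<partial>lborel)"
    unfolding distr_eq by (rule nn_integral_density) (auto simp: wt_def)
  finally show ?thesis .
qed

end


locale ctx = qn nu N for nu :: "'a::euclidean_space \<Rightarrow> real" and N +
  fixes p \<alpha> :: real and f :: "'a \<Rightarrow> real" and ft :: "real \<Rightarrow> real"
  assumes p: "2 \<le> p" "p < hom_dim nu"
    and \<alpha>: "\<alpha> < (hom_dim nu - p) / p"
    and f: "C0_infty_punctured f"
    and radial: "\<forall>x. f x = ft (N x)"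
begin

definition k :: real where "k = (Q - p - \<alpha> * p) / p"

lemma p0: "p > 0" using p by simp

lemma k_pos: "k > 0"
proof -
  have "\<alpha> * p < Q - p" using \<alpha> p0 by (simp add: field_simps)
  then show ?thesis using p0 by (simp add: k_def)
qed

lemma kp: "k * p = Q - p - \<alpha> * p" using p0 by (simp add: k_def)

lemma f_C1: "\<And>x. f differentiable at x" "\<And>b. b \<in> Basis \<Longrightarrow> continuous_on UNIV (\<lambda>x. frechet_derivative f (at x) b)"
  "continuous_on UNIV f"
proof -
  have "Ck (Suc 0) f" "Ck 0 f" using f by (auto simp: C0_infty_punctured_def smooth_fun_def)
  then show "\<And>x. f differentiable at x" "\<And>b. b \<in> Basis \<Longrightarrow> continuous_on UNIV (\<lambda>x. frechet_derivative f (at x) b)"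
    "continuous_on UNIV f" by auto
qed

lemma f_meas[measurable]: "f \<in> borel_measurable borel" by (rule borel_measurable_continuous_onI[OF f_C1(3)])

lemma fd_expand: "frechet_derivative f (at z) h = (\<Sum>i\<in>Basis. (h \<bullet> i) * frechet_derivative f (at z) i)"
proof -
  have "(f has_derivative frechet_derivative f (at z)) (at z)" using f_C1(1) frechet_derivative_works by blast
  then have "linear (frechet_derivative f (at z))" by (intro bounded_linear.linear has_derivative_bounded_linear)
  from Linear_Algebra.linear_componentwise[OF this, of h 1] show ?thesis by simp
qed

definition e0 :: 'a where "e0 = (SOME b. b \<in> Basis)"
lemma e0: "e0 \<in> Basis" unfolding e0_def by (rule someI_ex) (use nonempty_Basis in blast)
definition y0 :: 'a where "y0 = dil nu (1 / N e0) e0"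
lemma Ny0: "N y0 = 1"
proof -
  have "N e0 > 0" using e0 by (intro N_pos) auto
  then show ?thesis by (simp add: y0_def N_dil)
qed

definition \<gamma>' :: "real \<Rightarrow> 'a" where "\<gamma>' r = (\<Sum>b\<in>Basis. (nu b * r powr (nu b - 1) * (y0 \<bullet> b)) *\<^sub>R b)"
definition D :: "real \<Rightarrow> real" where "D r = frechet_derivative f (at (dil nu r y0)) (\<gamma>' r)"

lemma ft_eq: "r > 0 \<Longrightarrow> ft r = f (dil nu r y0)"
  using radial by (simp add: N_dil Ny0)

lemma gamma_deriv: assumes r: "r > 0" shows "((\<lambda>r. dil nu r y0) has_vector_derivative \<gamma>' r) (at r)"
  unfolding dil_def[abs_def] \<gamma>'_def
proof (rule has_vector_derivative_sum)
  fix b :: 'a assume "b \<in> Basis"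
  have "((\<lambda>r. r powr nu b * (y0 \<bullet> b)) has_real_derivative nu b * r powr (nu b - 1) * (y0 \<bullet> b)) (at r)"
    by (rule DERIV_cmult_right[OF has_real_derivative_powr[OF r]])
  from has_vector_derivative_scaleR[OF this has_vector_derivative_const[of b]]
  show "((\<lambda>r. (r powr nu b * (y0 \<bullet> b)) *\<^sub>R b) has_vector_derivative (nu b * r powr (nu b - 1) * (y0 \<bullet> b)) *\<^sub>R b) (at r)"
    by simp
qed

lemma ft_deriv: assumes r: "r > 0" shows "(ft has_real_derivative D r) (at r)"
proof -
  have "(f has_derivative frechet_derivative f (at (dil nu r y0))) (at (dil nu r y0))"
    using f_C1(1) frechet_derivative_works by blast
  then have "(f has_derivative frechet_derivative f (at (dil nu r y0))) (at (dil nu r y0) within range (\<lambda>r. dil nu r y0))"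
    by (rule has_derivative_at_withinI)
  from vector_derivative_diff_chain_within[OF gamma_deriv[OF r] this]
  have "((\<lambda>r. f (dil nu r y0)) has_real_derivative D r) (at r)"
    by (simp add: D_def o_def has_real_derivative_iff_has_vector_derivative)
  then show ?thesis
    by (rule has_field_derivative_transform_within_open[where S="{0<..}"]) (use r in \<open>auto simp: ft_eq\<close>)
qed

lemma curve_cont: "continuous_on {0<..} (\<lambda>r. dil nu r y0)"
  unfolding dil_def by (intro continuous_on_sum continuous_on_scaleR continuous_on_mult continuous_on_powr
            continuous_on_id continuous_on_const) auto

lemma gamma'_cont: "continuous_on {0<..} \<gamma>'"
  unfolding \<gamma>'_def by (intro continuous_on_sum continuous_on_scaleR continuous_on_mult continuous_on_powr
            continuous_on_id continuous_on_const continuous_on_diff) auto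

lemma D_cont: "continuous_on {0<..} D"
proof -
  have eqD: "D = (\<lambda>r. \<Sum>i\<in>Basis. (\<gamma>' r \<bullet> i) * frechet_derivative f (at (dil nu r y0)) i)"
    unfolding D_def by (rule ext) (rule fd_expand)
  have "continuous_on {0<..} (\<lambda>r. \<Sum>i\<in>Basis. (\<gamma>' r \<bullet> i) * frechet_derivative f (at (dil nu r y0)) i)"
  proof (intro continuous_on_sum continuous_on_mult continuous_on_inner gamma'_cont continuous_on_const)
    fix i :: 'a assume "i \<in> Basis"
    show "continuous_on {0<..} (\<lambda>r. frechet_derivative f (at (dil nu r y0)) i)"
      by (rule continuous_on_compose2[OF f_C1(2)[OF \<open>i \<in> Basis\<close>] curve_cont]) auto
  qed
  then show ?thesis unfolding eqD .
qed

lemma ft_cont: "continuous_on {0<..} ft"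
proof (intro continuous_at_imp_continuous_on ballI)
  fix r :: real assume "r \<in> {0<..}"
  then show "isCont ft r" using DERIV_isCont[OF ft_deriv[of r]] by simp
qed

end


context ctx begin

lemma supp_bounds: obtains m1 M1 where "0 < m1" "m1 \<le> M1" "\<And>x. f x \<noteq> 0 \<Longrightarrow> m1 \<le> N x \<and> N x \<le> M1"
proof -
  obtain K where K: "compact K" "0 \<notin> K" "\<And>x. x \<notin> K \<Longrightarrow> f x = 0"
    using f by (auto simp: C0_infty_punctured_def)
  show ?thesis
  proof (cases "K = {}")
    case True
    then show ?thesis using that[of 1 1] K(3) by auto
  next
    case False
    have co: "continuous_on K N" by (rule continuous_on_subset[OF N_cont]) simp
    from continuous_attains_inf[OF K(1) False co] obtain x1 where x1: "x1 \<in> K" "\<forall>y\<in>K. N x1 \<le> N y" by blast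
    from continuous_attains_sup[OF K(1) False co] obtain x2 where x2: "x2 \<in> K" "\<forall>y\<in>K. N y \<le> N x2" by blast
    have "x1 \<noteq> 0" using x1 K(2) by auto
    then have "N x1 > 0" by (rule N_pos)
    moreover have "N x1 \<le> N x2" using x1 x2 by auto
    moreover have "N x1 \<le> N x \<and> N x \<le> N x2" if "f x \<noteq> 0" for x
      using K(3)[of x] that x1 x2 by auto
    ultimately show ?thesis by (rule that)
  qed
qed

definition m1 where "m1 = (SOME m. \<exists>M. 0 < m \<and> m \<le> M \<and> (\<forall>x. f x \<noteq> 0 \<longrightarrow> m \<le> N x \<and> N x \<le> M))"
definition M1 where "M1 = (SOME M. 0 < m1 \<and> m1 \<le> M \<and> (\<forall>x. f x \<noteq> 0 \<longrightarrow> m1 \<le> N x \<and> N x \<le> M))"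

lemma m1M1: "0 < m1" "m1 \<le> M1" "\<And>x. f x \<noteq> 0 \<Longrightarrow> m1 \<le> N x \<and> N x \<le> M1"
proof -
  have "\<exists>m M. 0 < m \<and> m \<le> M \<and> (\<forall>x. f x \<noteq> 0 \<longrightarrow> m \<le> N x \<and> N x \<le> M)"
    using supp_bounds by metis
  then have "\<exists>M. 0 < m1 \<and> m1 \<le> M \<and> (\<forall>x. f x \<noteq> 0 \<longrightarrow> m1 \<le> N x \<and> N x \<le> M)"
    unfolding m1_def by (rule someI_ex)
  then have "0 < m1 \<and> m1 \<le> M1 \<and> (\<forall>x. f x \<noteq> 0 \<longrightarrow> m1 \<le> N x \<and> N x \<le> M1)"
    unfolding M1_def by (rule someI_ex)
  then show "0 < m1" "m1 \<le> M1" "\<And>x. f x \<noteq> 0 \<Longrightarrow> m1 \<le> N x \<and> N x \<le> M1" by auto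
qed

lemma ft_supp: assumes "r > 0" "r < m1 \<or> M1 < r" shows "ft r = 0"
proof (rule ccontr)
  assume "ft r \<noteq> 0"
  then have "f (dil nu r y0) \<noteq> 0" using ft_eq assms by simp
  from m1M1(3)[OF this] show False using assms by (simp add: N_dil Ny0)
qed

definition v :: "real \<Rightarrow> real" where "v s = exp (- k * s) * ft (exp (- s))"
definition v' :: "real \<Rightarrow> real" where "v' s = - k * v s - exp (- k * s) * exp (- s) * D (exp (- s))"
definition aa :: real where "aa = - ln M1 - 1"
definition bb :: real where "bb = - ln m1 + 1"

lemma ftexp_cont: "continuous_on UNIV (\<lambda>s. ft (exp (- s)))"
  by (rule continuous_on_compose2[OF ft_cont]) (auto intro!: continuous_intros)
lemma Dexp_cont: "continuous_on UNIV (\<lambda>s. D (exp (- s)))"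
  by (rule continuous_on_compose2[OF D_cont]) (auto intro!: continuous_intros)
lemma ftexp_meas[measurable]: "(\<lambda>s. ft (exp (- s))) \<in> borel_measurable borel"
  by (rule borel_measurable_continuous_onI[OF ftexp_cont])
lemma Dexp_meas[measurable]: "(\<lambda>s. D (exp (- s))) \<in> borel_measurable borel"
  by (rule borel_measurable_continuous_onI[OF Dexp_cont])

lemma v_deriv: "(v has_real_derivative v' s) (at s)"
proof -
  have e: "((\<lambda>s. exp (- s)) has_real_derivative - exp (- s)) (at s)" by (auto intro!: derivative_eq_intros)
  have d1: "((\<lambda>s. ft (exp (- s))) has_real_derivative D (exp (- s)) * - exp (- s)) (at s)"
    by (rule DERIV_chain2[OF ft_deriv e]) simp
  have d2: "((\<lambda>s. exp (- k * s)) has_real_derivative exp (- k * s) * (- k)) (at s)"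
    by (auto intro!: derivative_eq_intros)
  have "(v has_real_derivative (exp (- k * s) * (- k)) * ft (exp (- s)) + (D (exp (- s)) * - exp (- s)) * exp (- k * s)) (at s)"
    unfolding v_def[abs_def] by (rule DERIV_mult[OF d2 d1])
  then show ?thesis by (simp add: v'_def v_def algebra_simps)
qed

lemma v'_cont: "continuous_on UNIV v'"
  unfolding v'_def[abs_def] v_def
  by (intro continuous_intros ftexp_cont Dexp_cont)

lemma v_supp: assumes "s \<le> aa \<or> bb \<le> s" shows "v s = 0"
proof -
  have "exp (- s) < m1 \<or> M1 < exp (- s)"
  proof (cases "s \<le> aa")
    case True
    then have "ln M1 < - s" by (simp add: aa_def)
    then have "exp (ln M1) < exp (- s)" by simp
    then show ?thesis using m1M1 by simp
  next
    case False
    then have "bb \<le> s" using assms by simp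
    then have "- s < ln m1" by (simp add: bb_def)
    then have "exp (- s) < exp (ln m1)" by simp
    then show ?thesis using m1M1 by simp
  qed
  then show ?thesis by (simp add: v_def ft_supp)
qed

lemma aabb: "aa \<le> bb"
proof -
  have "ln m1 \<le> ln M1" using m1M1 by simp
  then show ?thesis by (simp add: aa_def bb_def)
qed

lemma oned_inst: "oned v v' p k aa bb"
  by (unfold_locales) (use p k_pos aabb v_deriv v'_cont v_supp in auto)

lemma radial_deriv_eq: assumes x: "x \<noteq> 0" shows "radial_deriv nu N f x = D (N x)"
proof -
  define y where "y = dil nu (1 / N x) x"
  have Nx: "N x > 0" using N_pos[OF x] .
  have Ny: "N y = 1" using Nx by (simp add: y_def N_dil)
  have "((\<lambda>r. f (dil nu r y)) has_real_derivative D (N x)) (at (N x))"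
    by (rule has_field_derivative_transform_within_open[OF ft_deriv[OF Nx], where S="{0<..}"])
       (use Nx radial Ny in \<open>auto simp: N_dil\<close>)
  then have "deriv (\<lambda>r. f (dil nu r y)) (N x) = D (N x)" by (rule DERIV_imp_deriv)
  then show ?thesis using x by (simp add: radial_deriv_def y_def)
qed

end


context ctx begin

definition KK :: real where "KK = Q * V1"
lemma KK_nonneg: "KK \<ge> 0" using Q_pos V1_nonneg by (simp add: KK_def)

lemma exp_powr_eq: fixes c s :: real shows "exp (- c * s) = exp (- s) powr c"
  by (simp add: powr_def)

lemma wt_eq: "wt s = KK * exp (- s) powr Q"
  by (simp add: wt_def KK_def powr_def)

definition hA :: "real \<Rightarrow> real" where "hA s = \<bar>D (exp (- s))\<bar> powr p / exp (- s) powr (\<alpha> * p)"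
definition hB :: "real \<Rightarrow> real" where "hB s = \<bar>ft (exp (- s))\<bar> powr p / exp (- s) powr ((\<alpha> + 1) * p)"

lemma hA_meas[measurable]: "hA \<in> borel_measurable borel" unfolding hA_def[abs_def] by measurable
lemma hB_meas[measurable]: "hB \<in> borel_measurable borel" unfolding hB_def[abs_def] by measurable

lemma IA: "wt s * hA s = KK * phi p (v' s + k * v s)"
proof -
  define r where "r = exp (- s)"
  have r: "r > 0" by (simp add: r_def)
  have ek: "exp (- k * s) = r powr k" unfolding r_def by (rule exp_powr_eq)
  have "v' s + k * v s = - (r powr k * r * D r)"
    unfolding v'_def v_def ek r_def[symmetric] by (simp add: algebra_simps)
  also have "r powr k * r = r powr (k + 1)" using r by (simp add: powr_add)
  finally have "v' s + k * v s = - (r powr (k + 1) * D r)" by simp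
  then have 2: "phi p (v' s + k * v s) = r powr ((k+1)*p) * \<bar>D r\<bar> powr p"
    using r by (simp add: phi_neg phi_mult powr_powr) (simp add: phi_def)
  have ex: "Q - \<alpha> * p = (k+1)*p" using kp by (simp add: algebra_simps)
  have 3: "r powr Q / r powr (\<alpha> * p) = r powr ((k+1)*p)"
    using r by (simp add: powr_diff[symmetric] ex)
  have "wt s * hA s = KK * (r powr Q / r powr (\<alpha> * p)) * \<bar>D r\<bar> powr p"
    by (simp add: wt_eq hA_def r_def)
  also have "\<dots> = KK * phi p (v' s + k * v s)" unfolding 3 2 by simp
  finally show ?thesis .
qed

lemma IB: "wt s * hB s = KK * phi p (v s)"
proof -
  define r where "r = exp (- s)"
  have r: "r > 0" by (simp add: r_def)
  have ek: "exp (- k * s) = r powr k" unfolding r_def by (rule exp_powr_eq)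
  have "v s = r powr k * ft r" unfolding v_def ek r_def ..
  then have 2: "phi p (v s) = r powr (k*p) * \<bar>ft r\<bar> powr p"
    using r by (simp add: phi_mult powr_powr) (simp add: phi_def)
  have ex: "Q - (\<alpha> + 1) * p = k*p" using kp by (simp add: algebra_simps)
  have 3: "r powr Q / r powr ((\<alpha> + 1) * p) = r powr (k*p)"
    using r by (simp add: powr_diff[symmetric] ex)
  have "wt s * hB s = KK * (r powr Q / r powr ((\<alpha> + 1) * p)) * \<bar>ft r\<bar> powr p"
    by (simp add: wt_eq hB_def r_def)
  also have "\<dots> = KK * phi p (v s)" unfolding 3 2 by simp
  finally show ?thesis .
qed

definition hI :: "real \<Rightarrow> real \<Rightarrow> real" where
  "hI R s = \<bar>ft (exp (- s)) - (R powr ((Q - p - \<alpha> * p) / p) * ft R)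
                          * exp (- s) powr (- (Q - p - \<alpha> * p) / p)\<bar> powr p
                     / (\<bar>ln (R / exp (- s))\<bar> powr p * exp (- s) powr ((\<alpha> + 1) * p))"

lemma hI_meas[measurable]: "hI R \<in> borel_measurable borel" unfolding hI_def[abs_def] by measurable

lemma ID: assumes R: "R > 0" shows "wt s * hI R s = KK * oned.hh v p (- ln R) s"
proof -
  define r where "r = exp (- s)"
  have r: "r > 0" by (simp add: r_def)
  define c where "c = R powr k * ft R"
  have ke: "(Q - p - \<alpha> * p) / p = k" "- (Q - p - \<alpha> * p) / p = - k" by (simp_all add: k_def minus_divide_left)
  define P where "P = \<bar>ft r - c * r powr (- k)\<bar> powr p"
  define L where "L = \<bar>ln (R / r)\<bar> powr p"
  have hI': "hI R s = P / (L * r powr ((\<alpha> + 1) * p))"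
    unfolding hI_def ke P_def L_def c_def r_def ..
  have ek0: "exp (- k * (- ln R)) = R powr k" using R by (simp add: powr_def)
  have vs0: "v (- ln R) = R powr k * ft R" using R unfolding v_def ek0 by simp
  have ek: "exp (- k * s) = r powr k" unfolding r_def by (rule exp_powr_eq)
  have vs: "v s = r powr k * ft r" unfolding v_def ek r_def ..
  have "v s - v (- ln R) = r powr k * (ft r - c * r powr (- k))"
    using r unfolding vs vs0 c_def by (simp add: algebra_simps powr_add[symmetric])
  then have ph: "phi p (v s - v (- ln R)) = r powr (k * p) * P"
    using r by (simp add: abs_mult powr_mult powr_powr P_def phi_def)
  have sL: "\<bar>s - - ln R\<bar> powr p = L"
  proof -
    have "ln (R / r) = ln R - ln r" using R r by (simp add: ln_div)
    then show ?thesis by (simp add: L_def r_def add.commute)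
  qed
  have ex: "Q - (\<alpha> + 1) * p = k*p" using kp by (simp add: algebra_simps)
  have 3: "r powr Q / r powr ((\<alpha> + 1) * p) = r powr (k*p)"
    using r by (simp add: powr_diff[symmetric] ex)
  have "wt s * hI R s = KK * r powr Q * (P / (L * r powr ((\<alpha> + 1) * p)))"
    by (simp add: wt_eq hI' r_def)
  also have "\<dots> = KK * (r powr Q / r powr ((\<alpha> + 1) * p)) * (P / L)"
    by (simp add: divide_inverse inverse_mult_distrib mult_ac)
  also have "\<dots> = KK * (phi p (v s - v (- ln R)) / \<bar>s - - ln R\<bar> powr p)"
    unfolding 3 ph sL by (simp add: mult_ac)
  finally show ?thesis by (simp add: oned.hh_def[OF oned_inst])
qed

end


context ctx begin

lemma rd_meas[measurable]: "radial_deriv nu N f \<in> borel_measurable borel"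
proof -
  have "radial_deriv nu N f = (\<lambda>x. if x \<in> - {0} then D (N x) else 0)"
  proof (rule ext)
    fix x :: 'a
    show "radial_deriv nu N f x = (if x \<in> - {0} then D (N x) else 0)"
    proof (cases "x = 0")
      case True then show ?thesis by (simp add: radial_deriv_def)
    next
      case False then show ?thesis by (simp add: radial_deriv_eq[OF False])
    qed
  qed
  also have "\<dots> \<in> borel_measurable borel"
  proof (rule borel_measurable_continuous_on_if)
    show "continuous_on (- {0}) (\<lambda>x. D (N x))"
      by (rule continuous_on_compose2[OF D_cont continuous_on_subset[OF N_cont]]) (use N_pos in fastforce)+
  qed auto
  finally show ?thesis .
qed

lemma AE0: "AE x in lborel. (x::'a) \<noteq> 0" by (rule AE_lborel_singleton)

lemma expln: "x \<noteq> 0 \<Longrightarrow> exp (- (- ln (N x))) = N x" using N_pos[of x] by simp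

lemma polar_gen:
  assumes [measurable]: "h \<in> borel_measurable borel" and h0: "\<And>s. h s \<ge> 0"
    and g: "\<And>x. x \<noteq> 0 \<Longrightarrow> g x = h (- ln (N x))"
    and hg: "\<And>s. wt s * h s = KK * H s" and [measurable]: "H \<in> borel_measurable borel"
    and H0: "\<And>s. H s \<ge> 0"
  shows "(\<integral>\<^sup>+ x. ennreal (g x) \<partial>lborel) = ennreal KK * (\<integral>\<^sup>+ s. ennreal (H s) \<partial>lborel)"
proof -
  have "(\<integral>\<^sup>+ x. ennreal (g x) \<partial>lborel) = (\<integral>\<^sup>+ x. ennreal (h (- ln (N x))) \<partial>lborel)"
    by (rule nn_integral_cong_AE) (use AE0 in \<open>auto elim!: eventually_mono simp: g\<close>)
  also have "\<dots> = (\<integral>\<^sup>+ s. ennreal (wt s) * ennreal (h s) \<partial>lborel)"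
    by (rule polar[of "\<lambda>s. ennreal (h s)"]) measurable
  also have "\<dots> = (\<integral>\<^sup>+ s. ennreal KK * ennreal (H s) \<partial>lborel)"
  proof (rule nn_integral_cong)
    fix s
    have "ennreal (wt s) * ennreal (h s) = ennreal (wt s * h s)" using wt_nonneg h0 by (simp add: ennreal_mult)
    also have "\<dots> = ennreal KK * ennreal (H s)" unfolding hg using KK_nonneg H0 by (simp add: ennreal_mult)
    finally show "ennreal (wt s) * ennreal (h s) = ennreal KK * ennreal (H s)" .
  qed
  also have "\<dots> = ennreal KK * (\<integral>\<^sup>+ s. ennreal (H s) \<partial>lborel)"
    by (rule nn_integral_cmult) measurable
  finally show ?thesis .
qed

lemma main_ctx:
  "ereal (Inf ((\<lambda>t. (1 - t) powr p - t powr p + p * t powr (p - 1)) ` {0<..1/2})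
              * ((p - 1) / p) powr p)
       * (SUP R\<in>{0<..}. enn2ereal (\<integral>\<^sup>+ x.
            ennreal (\<bar>f x - (R powr ((hom_dim nu - p - \<alpha> * p) / p) * ft R)
                          * N x powr (- (hom_dim nu - p - \<alpha> * p) / p)\<bar> powr p
                     / (\<bar>ln (R / N x)\<bar> powr p * N x powr ((\<alpha> + 1) * p))) \<partial>lborel))
     \<le> ereal ((\<integral>x. \<bar>radial_deriv nu N f x\<bar> powr p / N x powr (\<alpha> * p) \<partial>lborel)
              - ((hom_dim nu - p - \<alpha> * p) / p) powr p
                * (\<integral>x. \<bar>f x\<bar> powr p / N x powr ((\<alpha> + 1) * p) \<partial>lborel))"
proof -
  interpret O: oned v v' p k aa bb by (rule oned_inst)
  define A1 where "A1 = (\<integral>s. phi p (v' s + k * v s) \<partial>lborel)"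
  define B1 where "B1 = (\<integral>s. phi p (v s) \<partial>lborel)"
  define c where "c = cp p * ((p - 1) / p) powr p"
  have c0: "c \<ge> 0" using cp_nonneg[OF p(1)] by (simp add: c_def)
  have A10: "A1 \<ge> 0" "B1 \<ge> 0" unfolding A1_def B1_def by (auto intro!: integral_nonneg simp: phi_nonneg)
  have V0: "(\<integral>s. phi p (v' s) \<partial>lborel) \<ge> 0" by (auto intro!: integral_nonneg simp: phi_nonneg)
  have AB: "k powr p * B1 \<le> A1"
    using O.bochner_main cp_nonneg[OF p(1)] V0 unfolding A1_def B1_def
    by (smt (verit) mult_nonneg_nonneg)
  have nnA: "(\<integral>\<^sup>+ x. ennreal (\<bar>radial_deriv nu N f x\<bar> powr p / N x powr (\<alpha> * p)) \<partial>lborel) = ennreal (KK * A1)"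
  proof -
    have "(\<integral>\<^sup>+ x. ennreal (\<bar>radial_deriv nu N f x\<bar> powr p / N x powr (\<alpha> * p)) \<partial>lborel)
        = ennreal KK * (\<integral>\<^sup>+ s. ennreal (phi p (v' s + k * v s)) \<partial>lborel)"
    proof (rule polar_gen[where h=hA])
      show "\<And>s. 0 \<le> hA s" by (simp add: hA_def)
      show "\<And>x. x \<noteq> 0 \<Longrightarrow> \<bar>radial_deriv nu N f x\<bar> powr p / N x powr (\<alpha> * p) = hA (- ln (N x))"
        by (simp add: hA_def expln radial_deriv_eq del: minus_minus)
      show "\<And>s. wt s * hA s = KK * phi p (v' s + k * v s)" by (rule IA)
      show "(\<lambda>s. phi p (v' s + k * v s)) \<in> borel_measurable borel" using p0 by measurable
      show "\<And>s. 0 \<le> phi p (v' s + k * v s)" by (rule phi_nonneg)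
    qed measurable
    also have "\<dots> = ennreal KK * ennreal A1"
      unfolding A1_def by (subst nn_integral_eq_integral[OF O.int_A]) (auto simp: phi_nonneg)
    finally show ?thesis using KK_nonneg A10 by (simp add: ennreal_mult)
  qed
  have nnB: "(\<integral>\<^sup>+ x. ennreal (\<bar>f x\<bar> powr p / N x powr ((\<alpha> + 1) * p)) \<partial>lborel) = ennreal (KK * B1)"
  proof -
    have "(\<integral>\<^sup>+ x. ennreal (\<bar>f x\<bar> powr p / N x powr ((\<alpha> + 1) * p)) \<partial>lborel)
        = ennreal KK * (\<integral>\<^sup>+ s. ennreal (phi p (v s)) \<partial>lborel)"
    proof (rule polar_gen[where h=hB])
      show "\<And>s. 0 \<le> hB s" by (simp add: hB_def)
      show "\<And>x. x \<noteq> 0 \<Longrightarrow> \<bar>f x\<bar> powr p / N x powr ((\<alpha> + 1) * p) = hB (- ln (N x))"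
        by (simp add: hB_def expln radial del: minus_minus)
      show "\<And>s. wt s * hB s = KK * phi p (v s)" by (rule IB)
      show "(\<lambda>s. phi p (v s)) \<in> borel_measurable borel" using p0 by measurable
      show "\<And>s. 0 \<le> phi p (v s)" by (rule phi_nonneg)
    qed measurable
    also have "\<dots> = ennreal KK * ennreal B1"
      unfolding B1_def by (subst nn_integral_eq_integral[OF O.int_B]) (auto simp: phi_nonneg)
    finally show ?thesis using KK_nonneg A10 by (simp add: ennreal_mult)
  qed
  have intA: "(\<integral>x. \<bar>radial_deriv nu N f x\<bar> powr p / N x powr (\<alpha> * p) \<partial>lborel) = KK * A1"
    by (subst integral_eq_nn_integral) (auto simp: nnA KK_nonneg A10)
  have intB: "(\<integral>x. \<bar>f x\<bar> powr p / N x powr ((\<alpha> + 1) * p) \<partial>lborel) = KK * B1"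
    by (subst integral_eq_nn_integral) (auto simp: nnB KK_nonneg A10)
  define X where "X = KK * (A1 - k powr p * B1)"
  have X0: "X \<ge> 0" using KK_nonneg AB by (simp add: X_def)
  have nnD: "(\<integral>\<^sup>+ x. ennreal (\<bar>f x - (R powr ((hom_dim nu - p - \<alpha> * p) / p) * ft R)
                          * N x powr (- (hom_dim nu - p - \<alpha> * p) / p)\<bar> powr p
                     / (\<bar>ln (R / N x)\<bar> powr p * N x powr ((\<alpha> + 1) * p))) \<partial>lborel)
      = ennreal KK * (\<integral>\<^sup>+ s. ennreal (O.hh (- ln R) s) \<partial>lborel)" if R: "R > 0" for R
  proof (rule polar_gen[where h="hI R"])
    show "\<And>s. 0 \<le> hI R s" by (simp add: hI_def)
    show "\<And>x. x \<noteq> 0 \<Longrightarrow> \<bar>f x - (R powr ((hom_dim nu - p - \<alpha> * p) / p) * ft R)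
                          * N x powr (- (hom_dim nu - p - \<alpha> * p) / p)\<bar> powr p
                     / (\<bar>ln (R / N x)\<bar> powr p * N x powr ((\<alpha> + 1) * p)) = hI R (- ln (N x))"
      unfolding hI_def expln by (simp add: radial[rule_format])
    show "\<And>s. wt s * hI R s = KK * O.hh (- ln R) s" by (rule ID[OF R])
    show "\<And>s. 0 \<le> O.hh (- ln R) s" by (simp add: O.hh_def phi_nonneg)
  qed measurable
  have perR: "ereal c * enn2ereal (\<integral>\<^sup>+ x. ennreal (\<bar>f x - (R powr ((hom_dim nu - p - \<alpha> * p) / p) * ft R)
                          * N x powr (- (hom_dim nu - p - \<alpha> * p) / p)\<bar> powr p
                     / (\<bar>ln (R / N x)\<bar> powr p * N x powr ((\<alpha> + 1) * p))) \<partial>lborel) \<le> ereal X"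
    if R: "R > 0" for R
  proof -
    have "ennreal c * (ennreal KK * (\<integral>\<^sup>+ s. ennreal (O.hh (- ln R) s) \<partial>lborel))
        = ennreal KK * (ennreal c * (\<integral>\<^sup>+ s. ennreal (O.hh (- ln R) s) \<partial>lborel))" by (simp add: mult_ac)
    also have "\<dots> \<le> ennreal KK * ennreal (A1 - k powr p * B1)"
      by (intro mult_left_mono) (use O.oned_final[of "- ln R"] in \<open>auto simp: c_def A1_def B1_def\<close>)
    also have "\<dots> = ennreal X" using KK_nonneg AB by (simp add: X_def ennreal_mult)
    finally have le: "ennreal c * (ennreal KK * (\<integral>\<^sup>+ s. ennreal (O.hh (- ln R) s) \<partial>lborel)) \<le> ennreal X" .
    have "ereal c * enn2ereal (ennreal KK * (\<integral>\<^sup>+ s. ennreal (O.hh (- ln R) s) \<partial>lborel))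
        = enn2ereal (ennreal c * (ennreal KK * (\<integral>\<^sup>+ s. ennreal (O.hh (- ln R) s) \<partial>lborel)))"
      using c0 by (simp add: times_ennreal.rep_eq)
    also have "\<dots> \<le> enn2ereal (ennreal X)" using le by (simp add: less_eq_ennreal.rep_eq)
    also have "\<dots> = ereal X" using X0 by simp
    finally show ?thesis unfolding nnD[OF R] .
  qed
  have "ereal c * (SUP R\<in>{0<..}. enn2ereal (\<integral>\<^sup>+ x.
            ennreal (\<bar>f x - (R powr ((hom_dim nu - p - \<alpha> * p) / p) * ft R)
                          * N x powr (- (hom_dim nu - p - \<alpha> * p) / p)\<bar> powr p
                     / (\<bar>ln (R / N x)\<bar> powr p * N x powr ((\<alpha> + 1) * p))) \<partial>lborel))
      = (SUP R\<in>{0<..}. ereal c * enn2ereal (\<integral>\<^sup>+ x.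
            ennreal (\<bar>f x - (R powr ((hom_dim nu - p - \<alpha> * p) / p) * ft R)
                          * N x powr (- (hom_dim nu - p - \<alpha> * p) / p)\<bar> powr p
                     / (\<bar>ln (R / N x)\<bar> powr p * N x powr ((\<alpha> + 1) * p))) \<partial>lborel))"
    by (rule SUP_ereal_mult_left[symmetric]) (use c0 in auto)
  also have "\<dots> \<le> ereal X" by (rule SUP_least) (use perR in auto)
  also have "X = (\<integral>x. \<bar>radial_deriv nu N f x\<bar> powr p / N x powr (\<alpha> * p) \<partial>lborel)
              - ((hom_dim nu - p - \<alpha> * p) / p) powr p
                * (\<integral>x. \<bar>f x\<bar> powr p / N x powr ((\<alpha> + 1) * p) \<partial>lborel)"
    unfolding intA intB X_def k_def by (simp add: algebra_simps)
  finally show ?thesis unfolding c_def cp_def .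
qed

end

theorem theorem4p1:
  fixes gmul :: "'a::euclidean_space \<Rightarrow> 'a \<Rightarrow> 'a"
    and nu :: "'a \<Rightarrow> real"
    and N :: "'a \<Rightarrow> real"
    and p \<alpha> :: real
    and f :: "'a \<Rightarrow> real"
    and ft :: "real \<Rightarrow> real"
  assumes G: "homogeneous_group gmul nu"
    and Q3: "hom_dim nu \<ge> 3"
    and N: "hom_quasi_norm nu N"
    and p: "2 \<le> p" "p < hom_dim nu"
    and \<alpha>: "\<alpha> < (hom_dim nu - p) / p"
    and f: "C0_infty_punctured f"
    and radial: "\<forall>x. f x = ft (N x)"
  shows
    "ereal (Inf ((\<lambda>t. (1 - t) powr p - t powr p + p * t powr (p - 1)) ` {0<..1/2})
              * ((p - 1) / p) powr p)
       * (SUP R\<in>{0<..}. enn2ereal (\<integral>\<^sup>+ x.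
            ennreal (\<bar>f x - (R powr ((hom_dim nu - p - \<alpha> * p) / p) * ft R)
                          * N x powr (- (hom_dim nu - p - \<alpha> * p) / p)\<bar> powr p
                     / (\<bar>ln (R / N x)\<bar> powr p * N x powr ((\<alpha> + 1) * p))) \<partial>lborel))
     \<le> ereal ((\<integral>x. \<bar>radial_deriv nu N f x\<bar> powr p / N x powr (\<alpha> * p) \<partial>lborel)
              - ((hom_dim nu - p - \<alpha> * p) / p) powr p
                * (\<integral>x. \<bar>f x\<bar> powr p / N x powr ((\<alpha> + 1) * p) \<partial>lborel))"
proof -
  have nu: "\<And>b. b \<in> Basis \<Longrightarrow> nu b > 0" using G by (simp add: homogeneous_group_def)
  interpret ctx nu N p \<alpha> f ft
    by unfold_locales (use nu N p \<alpha> f radial in auto)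
  show ?thesis by (rule main_ctx)
qed

end
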